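(* Let $\Omega$ be the set of nonempty subsets of $\{1,\dots,N\}$, $N\ge2$. The chain $Q$ restricted to $\Omega$ is a reversible ergodic Markov chain with stationary distribution $\mathcal{M}(S)=3^{|S|}/(4^N-1)$, $S\in\Omega$, and its spectral gap satisfies $$\lambda_Q\ \ge\ \frac{4}{9N(N-1)}.$$
   Context: The chain $Q$ on subsets $S\subseteq\{1,\dots,N\}$: from $S$, choose an ordered pair $(c,t)$ of distinct indices uniformly at random (probability $1/(N(N-1))$ each); let $(s_c,s_t)\in\{0,1\}^2$ record whether $c\in S$, $t\in S$; replace this membership pattern by a new one according to: $(0,0)\to(0,0)$ with probability 1; $(1,0)\to(1,1)$ w.p. $2/3$, $\to(1,0)$ w.p. $1/3$; $(0,1)\to(1,1)$ w.p. $2/3$, $\to(0,1)$ w.p. $1/3$; $(1,1)\to(1,1)$ w.p. $5/9$, $\to(1,0)$ w.p. $2/9$, $\to(0,1)$ w.p. $2/9$; membership of other indices unchanged. The empty set is an absorbing isolated state, so $Q$ restricts to $\Omega$. The spectral gap $\lambda_Q$ is $1$ minus the second largest eigenvalue of the transition matrix of $Q$ on $\Omega$. *)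

theory Defs
  imports Complex_Main
begin

definition Omega :: "nat \<Rightarrow> nat set set" where
  "Omega N = {S. S \<subseteq> {1..N} \<and> S \<noteq> {}}"

text \<open>Local update rule on the membership pattern (s_c, s_t) of the ordered pair (c,t).\<close>
definition pat_prob :: "bool \<times> bool \<Rightarrow> bool \<times> bool \<Rightarrow> real" where
  "pat_prob old new =
     (case old of
        (False, False) \<Rightarrow> (if new = (False, False) then 1 else 0)
      | (True, False) \<Rightarrow> (if new = (True, True) then 2/3 else if new = (True, False) then 1/3 else 0)
      | (False, True) \<Rightarrow> (if new = (True, True) then 2/3 else if new = (False, True) then 1/3 else 0)
      | (True, True) \<Rightarrow> (if new = (True, True) then 5/9 else if new = (True, False) then 2/9
                          else if new = (False, True) then 2/9 else 0))"

definition Qtrans :: "nat \<Rightarrow> nat set \<Rightarrow> nat set \<Rightarrow> real" where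
  "Qtrans N S T =
     (\<Sum>c\<in>{1..N}. \<Sum>t\<in>{1..N} - {c}.
        (if (\<forall>i. i \<notin> {c, t} \<longrightarrow> (i \<in> S \<longleftrightarrow> i \<in> T))
         then pat_prob (c \<in> S, t \<in> S) (c \<in> T, t \<in> T) / (real N * (real N - 1))
         else 0))"

fun Qpow :: "nat \<Rightarrow> nat \<Rightarrow> nat set \<Rightarrow> nat set \<Rightarrow> real" where
  "Qpow N 0 S T = (if S = T then 1 else 0)"
| "Qpow N (Suc n) S T = (\<Sum>U\<in>Omega N. Qtrans N S U * Qpow N n U T)"

definition Mdist :: "nat \<Rightarrow> nat set \<Rightarrow> real" where
  "Mdist N S = 3 ^ card S / (4 ^ N - 1)"

definition is_markov_on_Omega :: "nat \<Rightarrow> bool" where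
  "is_markov_on_Omega N \<longleftrightarrow>
     (\<forall>S\<in>Omega N. \<forall>T\<in>Omega N. Qtrans N S T \<ge> 0) \<and>
     (\<forall>S\<in>Omega N. (\<Sum>T\<in>Omega N. Qtrans N S T) = 1)"

text \<open>Ergodic (finite chain): irreducible and aperiodic, i.e. some power of the transition
  matrix is strictly positive.\<close>
definition ergodic_on_Omega :: "nat \<Rightarrow> bool" where
  "ergodic_on_Omega N \<longleftrightarrow> (\<exists>n. \<forall>S\<in>Omega N. \<forall>T\<in>Omega N. Qpow N n S T > 0)"

definition reversible_wrt :: "nat \<Rightarrow> (nat set \<Rightarrow> real) \<Rightarrow> bool" where
  "reversible_wrt N \<mu> \<longleftrightarrow>
     (\<forall>S\<in>Omega N. \<forall>T\<in>Omega N. \<mu> S * Qtrans N S T = \<mu> T * Qtrans N T S)"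

definition stationary_distribution :: "nat \<Rightarrow> (nat set \<Rightarrow> real) \<Rightarrow> bool" where
  "stationary_distribution N \<mu> \<longleftrightarrow>
     (\<forall>S\<in>Omega N. \<mu> S \<ge> 0) \<and> (\<Sum>S\<in>Omega N. \<mu> S) = 1 \<and>
     (\<forall>T\<in>Omega N. (\<Sum>S\<in>Omega N. \<mu> S * Qtrans N S T) = \<mu> T)"

definition is_eigenpair :: "nat \<Rightarrow> real \<Rightarrow> (nat set \<Rightarrow> real) \<Rightarrow> bool" where
  "is_eigenpair N lam f \<longleftrightarrow>
     (\<exists>S\<in>Omega N. f S \<noteq> 0) \<and>
     (\<forall>S\<in>Omega N. (\<Sum>T\<in>Omega N. Qtrans N S T * f T) = lam * f S)"

text \<open>Second largest eigenvalue (counted with multiplicity): the largest eigenvalue admitting an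
  eigenvector that is not constant on Omega N. (Constants are eigenvectors for the top
  eigenvalue 1; eigenvalue 1 counts again iff its eigenspace has dimension at least 2.)\<close>
definition second_eigenvalue :: "nat \<Rightarrow> real" where
  "second_eigenvalue N =
     Max {lam. \<exists>f. is_eigenpair N lam f \<and> \<not> (\<exists>c. \<forall>S\<in>Omega N. f S = c)}"

definition spectral_gap :: "nat \<Rightarrow> real" where
  "spectral_gap N = 1 - second_eigenvalue N"

end

theory Submission
  imports Defs "HOL-Library.Function_Algebras"
begin

definition upd :: "nat set \<Rightarrow> nat \<Rightarrow> nat \<Rightarrow> bool \<Rightarrow> bool \<Rightarrow> nat set" where
  "upd S c t u v = (S - {c,t}) \<union> (if u then {c} else {}) \<union> (if v then {t} else {})"

definition loc :: "(nat set \<Rightarrow> real) \<Rightarrow> nat set \<Rightarrow> nat \<Rightarrow> nat \<Rightarrow> real" where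
  "loc g S c t = (if c \<in> S then (if t \<in> S then 5/9 * g S + 2/9 * g (S - {t}) + 2/9 * g (S - {c})
      else 1/3 * g S + 2/3 * g (insert t S))
    else (if t \<in> S then 1/3 * g S + 2/3 * g (insert c S) else g S))"

lemma pat_nonneg: "pat_prob p q \<ge> 0"
  by (cases p; cases q) (auto simp: pat_prob_def split: bool.splits)

lemma pat_sum: "pat_prob p (True,True) + pat_prob p (True,False) + pat_prob p (False,True) + pat_prob p (False,False) = 1"
  by (cases p) (auto simp: pat_prob_def split: bool.splits)

lemma UNIV_bool2: "(UNIV :: (bool \<times> bool) set) = {(True,True),(True,False),(False,True),(False,False)}"
  by auto

lemma inner_sum:
  fixes g :: "nat set \<Rightarrow> real"
  assumes c: "c \<in> {1..N}" and t: "t \<in> {1..N}" and ct: "c \<noteq> t" and S: "S \<subseteq> {1..N}" "S \<noteq> {}"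
  shows "(\<Sum>T\<in>Omega N. (if (\<forall>i. i \<notin> {c, t} \<longrightarrow> (i \<in> S \<longleftrightarrow> i \<in> T))
           then pat_prob (c \<in> S, t \<in> S) (c \<in> T, t \<in> T) * g T else 0)) = loc g S c t"
proof -
  let ?A = "{1..N}"
  let ?cond = "\<lambda>T. (\<forall>i. i \<notin> {c, t} \<longrightarrow> (i \<in> S \<longleftrightarrow> i \<in> T))"
  let ?F = "\<lambda>T. pat_prob (c \<in> S, t \<in> S) (c \<in> T, t \<in> T) * g T"
  have PA: "Pow ?A = insert {} (Omega N)" and ne: "{} \<notin> Omega N"
    by (auto simp: Omega_def)
  have fin: "finite (Omega N)" unfolding Omega_def by auto
  have z: "(if ?cond {} then ?F {} else 0) = 0"
  proof (cases "?cond {}")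
    case True
    then have "S \<subseteq> {c,t}" by auto
    with S(2) have "c \<in> S \<or> t \<in> S" by auto
    then show ?thesis by (auto simp: pat_prob_def split: bool.splits)
  next
    case False
    then show ?thesis by (intro if_not_P)
  qed
  have "(\<Sum>T\<in>Omega N. (if ?cond T then ?F T else 0)) = (\<Sum>T\<in>Pow ?A. (if ?cond T then ?F T else 0))"
    unfolding PA using fin ne z by simp
  also have "\<dots> = (\<Sum>T\<in>{T\<in>Pow ?A. ?cond T}. ?F T)"
    by (rule sum.inter_filter[symmetric]) simp
  also have "\<dots> = (\<Sum>p\<in>UNIV. ?F (upd S c t (fst p) (snd p)))"
  proof (rule sum.reindex_bij_witness[where i = "\<lambda>T. (c \<in> T, t \<in> T)" and j = "\<lambda>p. upd S c t (fst p) (snd p)", symmetric])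
    fix p :: "bool \<times> bool"
    show "(c \<in> upd S c t (fst p) (snd p), t \<in> upd S c t (fst p) (snd p)) = p"
      using ct by (cases p) (auto simp: upd_def)
    show "upd S c t (fst p) (snd p) \<in> {T \<in> Pow ?A. ?cond T}"
      using c t S by (auto simp: upd_def)
  next
    fix T assume "T \<in> {T \<in> Pow ?A. ?cond T}"
    then show "upd S c t (fst (c \<in> T, t \<in> T)) (snd (c \<in> T, t \<in> T)) = T"
      by (auto simp: upd_def)
  qed auto
  also have "\<dots> = loc g S c t"
  proof -
    have e1: "insert t (insert c (S - {c, t})) = S" if "c \<in> S" "t \<in> S" using that by auto
    have e2: "insert c (S - {c, t}) = S - {t}" if "c \<in> S" using that ct by auto
    have e3: "insert t (S - {c, t}) = S - {c}" if "t \<in> S" using that ct by auto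
    have e4: "insert t (insert c (S - {c, t})) = insert t S" if "c \<in> S" using that by auto
    have e5: "insert t (insert c (S - {c, t})) = insert c S" if "t \<in> S" using that by auto
    have e7: "insert t (insert c (S - {t})) = insert c S" if "t \<in> S" using that by auto
    have e6: "S - {c, t} = S" if "c \<notin> S" "t \<notin> S" using that by auto
    show ?thesis
      unfolding UNIV_bool2 using ct
      by (cases "c \<in> S"; cases "t \<in> S")
         (simp_all add: upd_def loc_def pat_prob_def e1 e2 e3 e4 e5 e6 e7 insert_absorb)
  qed
  finally show ?thesis .
qed

lemma Q_apply:
  fixes g :: "nat set \<Rightarrow> real"
  assumes S: "S \<in> Omega N"
  shows "(\<Sum>T\<in>Omega N. Qtrans N S T * g T) =
    (\<Sum>c\<in>{1..N}. \<Sum>t\<in>{1..N} - {c}. loc g S c t) / (real N * (real N - 1))"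
proof -
  let ?A = "{1..N}"
  let ?D = "real N * (real N - 1)"
  let ?cond = "\<lambda>c t T. (\<forall>i. i \<notin> {c, t} \<longrightarrow> (i \<in> S \<longleftrightarrow> i \<in> T))"
  have "(\<Sum>T\<in>Omega N. Qtrans N S T * g T) =
     (\<Sum>T\<in>Omega N. \<Sum>c\<in>?A. \<Sum>t\<in>?A - {c}. (if ?cond c t T then pat_prob (c \<in> S, t \<in> S) (c \<in> T, t \<in> T) * g T else 0) / ?D)"
    unfolding Qtrans_def sum_distrib_right
    by (intro sum.cong refl) auto
  also have "\<dots> = (\<Sum>c\<in>?A. \<Sum>t\<in>?A - {c}. \<Sum>T\<in>Omega N. (if ?cond c t T then pat_prob (c \<in> S, t \<in> S) (c \<in> T, t \<in> T) * g T else 0) / ?D)"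
    by (subst sum.swap) (simp add: sum.swap[of _ "Omega N"])
  also have "\<dots> = (\<Sum>c\<in>?A. \<Sum>t\<in>?A - {c}. loc g S c t / ?D)"
  proof (intro sum.cong refl)
    fix c t assume c: "c \<in> ?A" and t: "t \<in> ?A - {c}"
    have SS: "S \<subseteq> ?A" "S \<noteq> {}" using S by (auto simp: Omega_def)
    have "(\<Sum>T\<in>Omega N. (if ?cond c t T then pat_prob (c \<in> S, t \<in> S) (c \<in> T, t \<in> T) * g T else 0) / ?D)
       = (\<Sum>T\<in>Omega N. (if ?cond c t T then pat_prob (c \<in> S, t \<in> S) (c \<in> T, t \<in> T) * g T else 0)) / ?D"
      by (simp add: sum_divide_distrib)
    also have "\<dots> = loc g S c t / ?D"
      using inner_sum[of c N t S g] c t SS by auto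
    finally show "(\<Sum>T\<in>Omega N. (if ?cond c t T then pat_prob (c \<in> S, t \<in> S) (c \<in> T, t \<in> T) * g T else 0) / ?D) = loc g S c t / ?D" .
  qed
  also have "\<dots> = (\<Sum>c\<in>?A. \<Sum>t\<in>?A - {c}. loc g S c t) / ?D"
    by (simp add: sum_divide_distrib)
  finally show ?thesis .
qed


lemma G1:
  fixes F :: "nat \<Rightarrow> real"
  assumes "finite A" "S \<subseteq> A"
  shows "(\<Sum>c\<in>A. \<Sum>t\<in>A - {c}. (if c \<in> S \<and> t \<notin> S then F t else 0)) = real (card S) * (\<Sum>t\<in>A - S. F t)"
proof -
  have "(\<Sum>c\<in>A. \<Sum>t\<in>A - {c}. (if c \<in> S \<and> t \<notin> S then F t else 0)) = (\<Sum>c\<in>A. if c \<in> S then (\<Sum>t\<in>A - S. F t) else 0)"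
  proof (intro sum.cong refl)
    fix c assume "c \<in> A"
    show "(\<Sum>t\<in>A - {c}. (if c \<in> S \<and> t \<notin> S then F t else 0)) = (if c \<in> S then (\<Sum>t\<in>A - S. F t) else 0)"
    proof (cases "c \<in> S")
      case True
      have "(\<Sum>t\<in>A - {c}. (if c \<in> S \<and> t \<notin> S then F t else 0)) = (\<Sum>t\<in>A - {c}. (if t \<notin> S then F t else 0))"
        using True by simp
      also have "\<dots> = (\<Sum>t\<in>{t\<in>A - {c}. t \<notin> S}. F t)"
        by (rule sum.inter_filter[symmetric]) (use assms in auto)
      also have "{t\<in>A - {c}. t \<notin> S} = A - S" using True by auto
      finally show ?thesis using True by simp
    qed simp
  qed
  also have "\<dots> = (\<Sum>c\<in>{c\<in>A. c \<in> S}. (\<Sum>t\<in>A - S. F t))"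
    by (rule sum.inter_filter[symmetric]) (use assms in auto)
  also have "{c\<in>A. c \<in> S} = S" using assms by auto
  finally show ?thesis by simp
qed

lemma G2:
  fixes F :: "nat \<Rightarrow> real"
  assumes "finite A" "S \<subseteq> A"
  shows "(\<Sum>c\<in>A. \<Sum>t\<in>A - {c}. (if c \<notin> S \<and> t \<in> S then F c else 0)) = real (card S) * (\<Sum>t\<in>A - S. F t)"
proof -
  have "(\<Sum>c\<in>A. \<Sum>t\<in>A - {c}. (if c \<notin> S \<and> t \<in> S then F c else 0)) = (\<Sum>c\<in>A. if c \<notin> S then real (card S) * F c else 0)"
  proof (intro sum.cong refl)
    fix c assume "c \<in> A"
    show "(\<Sum>t\<in>A - {c}. (if c \<notin> S \<and> t \<in> S then F c else 0)) = (if c \<notin> S then real (card S) * F c else 0)"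
    proof (cases "c \<in> S")
      case False
      have "(\<Sum>t\<in>A - {c}. (if c \<notin> S \<and> t \<in> S then F c else 0)) = (\<Sum>t\<in>A - {c}. (if t \<in> S then F c else 0))"
        using False by simp
      also have "\<dots> = (\<Sum>t\<in>{t\<in>A - {c}. t \<in> S}. F c)"
        by (rule sum.inter_filter[symmetric]) (use assms in auto)
      also have "{t\<in>A - {c}. t \<in> S} = S" using False assms by auto
      finally show ?thesis using False by simp
    qed simp
  qed
  also have "\<dots> = (\<Sum>c\<in>{c\<in>A. c \<notin> S}. real (card S) * F c)"
    by (rule sum.inter_filter[symmetric]) (use assms in auto)
  also have "{c\<in>A. c \<notin> S} = A - S" by auto
  finally show ?thesis by (simp add: sum_distrib_left)
qed

lemma G3:
  fixes F :: "nat \<Rightarrow> real"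
  assumes "finite A" "S \<subseteq> A"
  shows "(\<Sum>c\<in>A. \<Sum>t\<in>A - {c}. (if c \<in> S \<and> t \<in> S then F t else 0)) = (real (card S) - 1) * (\<Sum>t\<in>S. F t)"
proof -
  have fS: "finite S" using assms finite_subset by blast
  have "(\<Sum>c\<in>A. \<Sum>t\<in>A - {c}. (if c \<in> S \<and> t \<in> S then F t else 0)) = (\<Sum>c\<in>A. if c \<in> S then (\<Sum>t\<in>S. F t) - F c else 0)"
  proof (intro sum.cong refl)
    fix c assume "c \<in> A"
    show "(\<Sum>t\<in>A - {c}. (if c \<in> S \<and> t \<in> S then F t else 0)) = (if c \<in> S then (\<Sum>t\<in>S. F t) - F c else 0)"
    proof (cases "c \<in> S")
      case True
      have "(\<Sum>t\<in>A - {c}. (if c \<in> S \<and> t \<in> S then F t else 0)) = (\<Sum>t\<in>A - {c}. (if t \<in> S then F t else 0))"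
        using True by simp
      also have "\<dots> = (\<Sum>t\<in>{t\<in>A - {c}. t \<in> S}. F t)"
        by (rule sum.inter_filter[symmetric]) (use assms in auto)
      also have "{t\<in>A - {c}. t \<in> S} = S - {c}" using True assms by auto
      also have "(\<Sum>t\<in>S - {c}. F t) = (\<Sum>t\<in>S. F t) - F c" using True fS by (simp add: sum_diff1)
      finally show ?thesis using True by simp
    qed simp
  qed
  also have "\<dots> = (\<Sum>c\<in>{c\<in>A. c \<in> S}. (\<Sum>t\<in>S. F t) - F c)"
    by (rule sum.inter_filter[symmetric]) (use assms in auto)
  also have "{c\<in>A. c \<in> S} = S" using assms by auto
  finally show ?thesis by (simp add: sum_subtractf algebra_simps)
qed

lemma G4:
  fixes F :: "nat \<Rightarrow> real"
  assumes "finite A" "S \<subseteq> A"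
  shows "(\<Sum>c\<in>A. \<Sum>t\<in>A - {c}. (if c \<in> S \<and> t \<in> S then F c else 0)) = (real (card S) - 1) * (\<Sum>t\<in>S. F t)"
proof -
  have fS: "finite S" using assms finite_subset by blast
  have "(\<Sum>c\<in>A. \<Sum>t\<in>A - {c}. (if c \<in> S \<and> t \<in> S then F c else 0)) = (\<Sum>c\<in>A. if c \<in> S then (real (card S) - 1) * F c else 0)"
  proof (intro sum.cong refl)
    fix c assume "c \<in> A"
    show "(\<Sum>t\<in>A - {c}. (if c \<in> S \<and> t \<in> S then F c else 0)) = (if c \<in> S then (real (card S) - 1) * F c else 0)"
    proof (cases "c \<in> S")
      case True
      have "(\<Sum>t\<in>A - {c}. (if c \<in> S \<and> t \<in> S then F c else 0)) = (\<Sum>t\<in>A - {c}. (if t \<in> S then F c else 0))"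
        using True by simp
      also have "\<dots> = (\<Sum>t\<in>{t\<in>A - {c}. t \<in> S}. F c)"
        by (rule sum.inter_filter[symmetric]) (use assms in auto)
      also have "{t\<in>A - {c}. t \<in> S} = S - {c}" using True assms by auto
      also have "card (S - {c}) = card S - 1" using True fS by simp
      moreover have "card S \<ge> 1" using True fS by (metis card_0_eq empty_iff less_one not_le)
      ultimately show ?thesis using True by (simp add: of_nat_diff)
    qed simp
  qed
  also have "\<dots> = (\<Sum>c\<in>{c\<in>A. c \<in> S}. (real (card S) - 1) * F c)"
    by (rule sum.inter_filter[symmetric]) (use assms in auto)
  also have "{c\<in>A. c \<in> S} = S" using assms by auto
  finally show ?thesis by (simp add: sum_distrib_left)
qed

lemma sum_card_pairs:
  assumes "finite A"
  shows "(\<Sum>c\<in>A. \<Sum>t\<in>A - {c}. (1::real)) = real (card A) * (real (card A) - 1)"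
proof -
  have "(\<Sum>c\<in>A. \<Sum>t\<in>A - {c}. (1::real)) = (\<Sum>c\<in>A. real (card A) - 1)"
  proof (intro sum.cong refl)
    fix c assume c: "c \<in> A"
    then have "card A \<ge> 1" using assms by (metis card_0_eq empty_iff less_one not_le)
    then show "(\<Sum>t\<in>A - {c}. (1::real)) = real (card A) - 1" using c assms by (simp add: of_nat_diff)
  qed
  then show ?thesis by simp
qed

lemma loc_split:
  "loc g S c t = g S + 2/3 * (if c \<in> S \<and> t \<notin> S then g (insert t S) - g S else 0)
     + 2/3 * (if c \<notin> S \<and> t \<in> S then g (insert c S) - g S else 0)
     + 2/9 * (if c \<in> S \<and> t \<in> S then g (S - {t}) - g S else 0)
     + 2/9 * (if c \<in> S \<and> t \<in> S then g (S - {c}) - g S else 0)"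
  unfolding loc_def by (simp add: field_simps)

lemma loc_total:
  fixes g :: "nat set \<Rightarrow> real"
  assumes "finite A" "S \<subseteq> A"
  shows "(\<Sum>c\<in>A. \<Sum>t\<in>A - {c}. loc g S c t) = real (card A) * (real (card A) - 1) * g S
     + 4/3 * real (card S) * (\<Sum>x\<in>A - S. g (insert x S) - g S)
     + 4/9 * (real (card S) - 1) * (\<Sum>x\<in>S. g (S - {x}) - g S)"
proof -
  have "(\<Sum>c\<in>A. \<Sum>t\<in>A - {c}. loc g S c t) =
     (\<Sum>c\<in>A. \<Sum>t\<in>A - {c}. (1::real)) * g S
     + 2/3 * (\<Sum>c\<in>A. \<Sum>t\<in>A - {c}. (if c \<in> S \<and> t \<notin> S then g (insert t S) - g S else 0))
     + 2/3 * (\<Sum>c\<in>A. \<Sum>t\<in>A - {c}. (if c \<notin> S \<and> t \<in> S then g (insert c S) - g S else 0))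
     + 2/9 * (\<Sum>c\<in>A. \<Sum>t\<in>A - {c}. (if c \<in> S \<and> t \<in> S then g (S - {t}) - g S else 0))
     + 2/9 * (\<Sum>c\<in>A. \<Sum>t\<in>A - {c}. (if c \<in> S \<and> t \<in> S then g (S - {c}) - g S else 0))"
    unfolding loc_split by (simp add: sum.distrib sum_distrib_left sum_distrib_right)
  also have "\<dots> = real (card A) * (real (card A) - 1) * g S
     + 2/3 * (real (card S) * (\<Sum>x\<in>A - S. g (insert x S) - g S))
     + 2/3 * (real (card S) * (\<Sum>x\<in>A - S. g (insert x S) - g S))
     + 2/9 * ((real (card S) - 1) * (\<Sum>x\<in>S. g (S - {x}) - g S))
     + 2/9 * ((real (card S) - 1) * (\<Sum>x\<in>S. g (S - {x}) - g S))"
    using assms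
    by (simp only: sum_card_pairs G1[where F = "\<lambda>t. g (insert t S) - g S"]
          G2[where F = "\<lambda>t. g (insert t S) - g S"] G3[where F = "\<lambda>t. g (S - {t}) - g S"]
          G4[where F = "\<lambda>t. g (S - {t}) - g S"])
  also have "\<dots> = real (card A) * (real (card A) - 1) * g S
     + 4/3 * real (card S) * (\<Sum>x\<in>A - S. g (insert x S) - g S)
     + 4/9 * (real (card S) - 1) * (\<Sum>x\<in>S. g (S - {x}) - g S)"
    by (simp add: field_simps)
  finally show ?thesis .
qed


lemma finite_Omega: "finite (Omega N)"
  unfolding Omega_def by auto

lemma Omega_iff: "S \<in> Omega N \<longleftrightarrow> S \<subseteq> {1..N} \<and> S \<noteq> {}"
  unfolding Omega_def by auto

lemma Q_op:
  fixes g :: "nat set \<Rightarrow> real"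
  assumes S: "S \<in> Omega N"
  shows "(\<Sum>T\<in>Omega N. Qtrans N S T * g T) =
    (real N * (real N - 1) * g S + 4/3 * real (card S) * (\<Sum>x\<in>{1..N} - S. g (insert x S) - g S)
     + 4/9 * (real (card S) - 1) * (\<Sum>x\<in>S. g (S - {x}) - g S)) / (real N * (real N - 1))"
  using Q_apply[OF S, of g] loc_total[of "{1..N}" S g] S by (simp add: Omega_iff)

lemma Q_op2:
  fixes g :: "nat set \<Rightarrow> real"
  assumes S: "S \<in> Omega N" and N: "N \<ge> 2"
  shows "(\<Sum>T\<in>Omega N. Qtrans N S T * g T) = g S +
    (4/3 * real (card S) * (\<Sum>x\<in>{1..N} - S. g (insert x S) - g S)
     + 4/9 * (real (card S) - 1) * (\<Sum>x\<in>S. g (S - {x}) - g S)) / (real N * (real N - 1))"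
proof -
  have aux: "(D * a + b + c) / D = a + (b + c) / D" if "D \<noteq> 0" for D a b c :: real
    using that by (simp add: field_simps)
  have "real N * (real N - 1) \<noteq> 0" using N by simp
  then show ?thesis unfolding Q_op[OF S] by (rule aux)
qed

lemma Q_rowsum:
  assumes S: "S \<in> Omega N" and N: "N \<ge> 2"
  shows "(\<Sum>T\<in>Omega N. Qtrans N S T) = 1"
  using Q_op2[OF S N, of "\<lambda>_. 1"] by simp

lemma Q_nonneg: "N \<ge> 2 \<Longrightarrow> Qtrans N S T \<ge> 0"
  unfolding Qtrans_def by (intro sum_nonneg) (simp add: pat_nonneg)

lemma card_split2:
  assumes "finite S" "c \<noteq> t"
  shows "card S = card (S - {c,t}) + (if c \<in> S then 1 else 0) + (if t \<in> S then 1 else 0)"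
proof -
  have "S = (S - {c,t}) \<union> (S \<inter> {c,t})" by auto
  then have "card S = card (S - {c,t}) + card (S \<inter> {c,t})"
    using assms by (subst card_Un_disjoint[symmetric]) auto
  moreover have "card (S \<inter> {c,t}) = (if c \<in> S then 1 else 0) + (if t \<in> S then 1 else 0)"
    using assms by (cases "c \<in> S"; cases "t \<in> S") (auto simp: Int_insert_right)
  ultimately show ?thesis by simp
qed

lemma rev_term:
  assumes "finite S" "finite T" "c \<noteq> t" "\<forall>i. i \<notin> {c, t} \<longrightarrow> (i \<in> S \<longleftrightarrow> i \<in> T)"
  shows "(3::real) ^ card S * pat_prob (c \<in> S, t \<in> S) (c \<in> T, t \<in> T) =
         3 ^ card T * pat_prob (c \<in> T, t \<in> T) (c \<in> S, t \<in> S)"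
proof -
  have e: "S - {c,t} = T - {c,t}" using assms(4) by auto
  define r where "r = card (S - {c,t})"
  have cS: "card S = r + (if c \<in> S then 1 else 0) + (if t \<in> S then 1 else 0)"
    using card_split2[OF assms(1,3)] r_def by simp
  have cT: "card T = r + (if c \<in> T then 1 else 0) + (if t \<in> T then 1 else 0)"
    using card_split2[OF assms(2,3)] r_def e by simp
  show ?thesis unfolding cS cT
    by (cases "c \<in> S"; cases "t \<in> S"; cases "c \<in> T"; cases "t \<in> T") (simp_all add: pat_prob_def power_add)
qed

lemma reversible: "N \<ge> 2 \<Longrightarrow> reversible_wrt N (Mdist N)"
  unfolding reversible_wrt_def
proof (intro ballI)
  fix S T assume N: "N \<ge> 2" and S: "S \<in> Omega N" and T: "T \<in> Omega N"
  have fS: "finite S" and fT: "finite T" using S T by (auto simp: Omega_iff intro: finite_subset)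
  show "Mdist N S * Qtrans N S T = Mdist N T * Qtrans N T S"
    unfolding Mdist_def Qtrans_def sum_distrib_left
  proof (intro sum.cong refl)
    fix c t assume "c \<in> {1..N}" "t \<in> {1..N} - {c}"
    then have ct: "c \<noteq> t" by auto
    show "3 ^ card S / (4 ^ N - 1) * (if \<forall>i. i \<notin> {c, t} \<longrightarrow> (i \<in> S) = (i \<in> T) then pat_prob (c \<in> S, t \<in> S) (c \<in> T, t \<in> T) / (real N * (real N - 1)) else 0) =
          3 ^ card T / (4 ^ N - 1) * (if \<forall>i. i \<notin> {c, t} \<longrightarrow> (i \<in> T) = (i \<in> S) then pat_prob (c \<in> T, t \<in> T) (c \<in> S, t \<in> S) / (real N * (real N - 1)) else 0)"
    proof (cases "\<forall>i. i \<notin> {c, t} \<longrightarrow> (i \<in> S) = (i \<in> T)")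
      case True
      then have True': "\<forall>i. i \<notin> {c, t} \<longrightarrow> (i \<in> T) = (i \<in> S)" by auto
      show ?thesis using rev_term[OF fS fT ct True] True True' by (simp add: field_simps)
    next
      case False
      then have False': "\<not> (\<forall>i. i \<notin> {c, t} \<longrightarrow> (i \<in> T) = (i \<in> S))" by auto
      show ?thesis by (subst if_not_P[OF False], subst if_not_P[OF False']) simp
    qed
  qed
qed


lemma sum_pow3:
  assumes "finite B"
  shows "(\<Sum>S\<in>Pow B. (3::real) ^ card S) = 4 ^ card B"
  using assms
proof (induction B rule: finite_induct)
  case empty
  then show ?case by simp
next
  case (insert a B)
  have fP: "finite (Pow B)" using insert by simp
  have dis: "Pow B \<inter> insert a ` Pow B = {}" using insert by auto
  have inj: "inj_on (insert a) (Pow B)" using insert unfolding inj_on_def by (metis Diff_insert_absorb PowD in_mono)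
  have "(\<Sum>S\<in>Pow (insert a B). (3::real) ^ card S) = (\<Sum>S\<in>Pow B. 3 ^ card S) + (\<Sum>S\<in>insert a ` Pow B. 3 ^ card S)"
    unfolding Pow_insert using fP dis by (simp add: sum.union_disjoint)
  also have "(\<Sum>S\<in>insert a ` Pow B. (3::real) ^ card S) = (\<Sum>S\<in>Pow B. 3 ^ card (insert a S))"
    using inj by (simp add: sum.reindex)
  also have "\<dots> = (\<Sum>S\<in>Pow B. 3 * 3 ^ card S)"
  proof (intro sum.cong refl)
    fix S assume "S \<in> Pow B"
    then have "a \<notin> S" "finite S" using insert by (auto intro: finite_subset)
    then show "(3::real) ^ card (insert a S) = 3 * 3 ^ card S" by simp
  qed
  finally show ?case using insert by (simp add: sum_distrib_left[symmetric])
qed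

lemma Pow_Omega: "Pow {1..N} = insert {} (Omega N)" and empty_notin_Omega: "{} \<notin> Omega N"
  by (auto simp: Omega_def)

lemma sum_Omega_split:
  fixes F :: "nat set \<Rightarrow> real"
  shows "(\<Sum>S\<in>Pow {1..N}. F S) = F {} + (\<Sum>S\<in>Omega N. F S)"
  unfolding Pow_Omega using finite_Omega empty_notin_Omega by simp

lemma sum_Omega_w: "(\<Sum>S\<in>Omega N. (3::real) ^ card S) = 4 ^ N - 1"
  using sum_Omega_split[where N=N and F="\<lambda>S. (3::real) ^ card S"] sum_pow3[of "{1..N}"] by simp

lemma markov: "N \<ge> 2 \<Longrightarrow> is_markov_on_Omega N"
  unfolding is_markov_on_Omega_def using Q_nonneg Q_rowsum by auto

lemma stationary: assumes N: "N \<ge> 2" shows "stationary_distribution N (Mdist N)"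
proof -
  have pos: "(4::real) ^ N - 1 > 0" using N by (simp add: one_less_power)
  have "(\<Sum>S\<in>Omega N. Mdist N S) = 1"
    unfolding Mdist_def using sum_Omega_w[of N] pos by (simp add: sum_divide_distrib[symmetric])
  moreover have "\<forall>S\<in>Omega N. Mdist N S \<ge> 0" unfolding Mdist_def using pos by simp
  moreover have "(\<Sum>S\<in>Omega N. Mdist N S * Qtrans N S T) = Mdist N T" if T: "T \<in> Omega N" for T
  proof -
    have "(\<Sum>S\<in>Omega N. Mdist N S * Qtrans N S T) = (\<Sum>S\<in>Omega N. Mdist N T * Qtrans N T S)"
      using reversible[OF N] T unfolding reversible_wrt_def by (intro sum.cong) auto
    also have "\<dots> = Mdist N T" using Q_rowsum[OF T N] by (simp add: sum_distrib_left[symmetric])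
    finally show ?thesis .
  qed
  ultimately show ?thesis unfolding stationary_distribution_def by auto
qed

lemma Qpow_nonneg: "N \<ge> 2 \<Longrightarrow> Qpow N n S T \<ge> 0"
  by (induction n arbitrary: S) (auto intro!: sum_nonneg mult_nonneg_nonneg Q_nonneg)

lemma Q_pos_term:
  assumes N: "N \<ge> 2" and c: "c \<in> {1..N}" and t: "t \<in> {1..N}" "c \<noteq> t"
    and cond: "\<forall>i. i \<notin> {c, t} \<longrightarrow> (i \<in> S \<longleftrightarrow> i \<in> T)"
    and p: "pat_prob (c \<in> S, t \<in> S) (c \<in> T, t \<in> T) > 0"
  shows "Qtrans N S T > 0"
  unfolding Qtrans_def
proof (rule sum_pos2[OF _ c])
  show "0 < (\<Sum>t\<in>{1..N} - {c}. if \<forall>i. i \<notin> {c, t} \<longrightarrow> (i \<in> S) = (i \<in> T) then pat_prob (c \<in> S, t \<in> S) (c \<in> T, t \<in> T) / (real N * (real N - 1)) else 0)"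
    using t cond p N by (intro sum_pos2[of _ t]) (auto simp: pat_nonneg)
  show "\<And>c. c \<in> {1..N} \<Longrightarrow> 0 \<le> (\<Sum>t\<in>{1..N} - {c}. if \<forall>i. i \<notin> {c, t} \<longrightarrow> (i \<in> S) = (i \<in> T) then pat_prob (c \<in> S, t \<in> S) (c \<in> T, t \<in> T) / (real N * (real N - 1)) else 0)"
    using N by (intro sum_nonneg) (auto simp: pat_nonneg)
qed auto

lemma Q_stay: assumes N: "N \<ge> 2" shows "Qtrans N S S > 0"
proof (rule Q_pos_term[OF N, of 1 2])
  show "0 < pat_prob (1 \<in> S, 2 \<in> S) (1 \<in> S, 2 \<in> S)"
    by (cases "1 \<in> S"; cases "2 \<in> S") (simp_all add: pat_prob_def)
qed (use N in auto)

lemma Q_add: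
  assumes N: "N \<ge> 2" and S: "S \<in> Omega N" and x: "x \<in> {1..N} - S"
  shows "Qtrans N S (insert x S) > 0"
proof -
  obtain c where c: "c \<in> S" using S by (auto simp: Omega_iff)
  show ?thesis
  proof (rule Q_pos_term[OF N, of c x])
    show "c \<in> {1..N}" using c S by (auto simp: Omega_iff)
  qed (use c x in \<open>auto simp: pat_prob_def\<close>)
qed

lemma Q_rem:
  assumes N: "N \<ge> 2" and S: "S \<in> Omega N" and x: "x \<in> S" and ne: "S - {x} \<noteq> {}"
  shows "Qtrans N S (S - {x}) > 0"
proof -
  obtain c where c: "c \<in> S" "c \<noteq> x" using ne by auto
  show ?thesis
  proof (rule Q_pos_term[OF N, of c x])
    show "c \<in> {1..N}" "x \<in> {1..N}" using c x S by (auto simp: Omega_iff)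
  qed (use c x in \<open>auto simp: pat_prob_def\<close>)
qed

lemma Qpow_step:
  assumes N: "N \<ge> 2" and U: "U \<in> Omega N" and q: "Qtrans N S U > 0" and p: "Qpow N n U T > 0"
  shows "Qpow N (Suc n) S T > 0"
  using N U q p finite_Omega by (auto intro!: sum_pos2[of _ U] mult_nonneg_nonneg Q_nonneg Qpow_nonneg)

lemma reach:
  assumes N: "N \<ge> 2"
  shows "S \<in> Omega N \<Longrightarrow> T \<in> Omega N \<Longrightarrow> card (S - T) + card (T - S) \<le> k \<Longrightarrow> Qpow N k S T > 0"
proof (induction k arbitrary: S)
  case 0
  have "finite S" "finite T" using 0 by (auto simp: Omega_iff intro: finite_subset)
  then have "S = T" using 0 by auto
  then show ?case by simp
next
  case (Suc k S)
  have fS: "finite S" and fT: "finite T" using Suc by (auto simp: Omega_iff intro: finite_subset)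
  show ?case
  proof (cases "S = T")
    case True
    then show ?thesis using Suc Q_stay[OF N] Qpow_step[OF N] by simp
  next
    case False
    show ?thesis
    proof (cases "T - S = {}")
      case False
      then obtain x where x: "x \<in> T" "x \<notin> S" by auto
      let ?U = "insert x S"
      have U: "?U \<in> Omega N" using Suc x by (auto simp: Omega_iff)
      have "?U - T = S - T" using x by auto
      moreover have "T - ?U = (T - S) - {x}" by auto
      moreover have "card ((T - S) - {x}) = card (T - S) - 1" using x fT by simp
      moreover have "card (T - S) \<ge> 1" using x fT card_gt_0_iff[of "T - S"] by auto
      ultimately have "card (?U - T) + card (T - ?U) \<le> k" using Suc.prems(3) by simp
      then have "Qpow N k ?U T > 0" using Suc.IH[OF U Suc.prems(2)] by simp
      moreover have "Qtrans N S ?U > 0" using Q_add[OF N Suc.prems(1)] x fT Suc.prems(2) by (auto simp: Omega_iff)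
      ultimately show ?thesis using Qpow_step[OF N U] by blast
    next
      case True
      with \<open>S \<noteq> T\<close> obtain x where x: "x \<in> S" "x \<notin> T" by auto
      let ?U = "S - {x}"
      have "T \<subseteq> ?U" using True x by auto
      then have ne: "?U \<noteq> {}" using Suc.prems(2) by (auto simp: Omega_iff)
      have U: "?U \<in> Omega N" using Suc ne by (auto simp: Omega_iff)
      have "?U - T = (S - T) - {x}" by auto
      moreover have "T - ?U = T - S" using x by auto
      moreover have "card ((S - T) - {x}) = card (S - T) - 1" using x fS by simp
      moreover have "card (S - T) \<ge> 1" using x fS card_gt_0_iff[of "S - T"] by auto
      ultimately have "card (?U - T) + card (T - ?U) \<le> k" using Suc.prems(3) by simp
      then have "Qpow N k ?U T > 0" using Suc.IH[OF U Suc.prems(2)] by simp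
      moreover have "Qtrans N S ?U > 0" using Q_rem[OF N Suc.prems(1) x(1) ne] .
      ultimately show ?thesis using Qpow_step[OF N U] by blast
    qed
  qed
qed

lemma ergodic: assumes N: "N \<ge> 2" shows "ergodic_on_Omega N"
  unfolding ergodic_on_Omega_def
proof (intro exI[of _ "2 * N"] ballI)
  fix S T assume S: "S \<in> Omega N" and T: "T \<in> Omega N"
  have "S - T \<subseteq> {1..N}" "T - S \<subseteq> {1..N}" using S T by (auto simp: Omega_iff)
  then have "card (S - T) \<le> card {1..N}" "card (T - S) \<le> card {1..N}"
    by (simp_all add: card_mono del: card_atLeastAtMost)
  then have "card (S - T) \<le> N" "card (T - S) \<le> N" by auto
  then show "Qpow N (2 * N) S T > 0" using reach[OF N S T] by simp
qed


lemma weighted_CS: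
  fixes w g :: "'a \<Rightarrow> real"
  assumes fin: "finite I" and w: "\<And>i. i \<in> I \<Longrightarrow> w i \<ge> 0" and Z: "(\<Sum>i\<in>I. w i) = Z" "Z > 0"
  shows "(\<Sum>i\<in>I. w i * g i)^2 \<le> Z * (\<Sum>i\<in>I. w i * (g i)^2)"
proof -
  define a where "a = (\<Sum>i\<in>I. w i * g i)"
  define q where "q = (\<Sum>i\<in>I. w i * (g i)^2)"
  have "0 \<le> (\<Sum>i\<in>I. w i * (Z * g i - a)^2)" using w by (intro sum_nonneg) simp
  also have "(\<Sum>i\<in>I. w i * (Z * g i - a)^2) = (\<Sum>i\<in>I. Z^2 * (w i * (g i)^2) - (2 * Z * a) * (w i * g i) + a^2 * w i)"
    by (intro sum.cong refl) (simp add: power2_eq_square algebra_simps)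
  also have "\<dots> = Z^2 * q - (2 * Z * a) * a + a^2 * Z"
    unfolding q_def a_def by (simp add: sum.distrib sum_subtractf sum_distrib_left[symmetric] Z(1))
  finally have "0 \<le> Z * (Z * q - a^2)" by (simp add: power2_eq_square algebra_simps)
  then have "0 \<le> Z * q - a^2" using Z(2) by (simp add: zero_le_mult_iff)
  then show ?thesis unfolding a_def q_def by simp
qed

lemma sum_Pow_insert:
  fixes F :: "nat set \<Rightarrow> real"
  assumes "finite B" "a \<notin> B"
  shows "(\<Sum>S\<in>Pow (insert a B). F S) = (\<Sum>S\<in>Pow B. F S + F (insert a S))"
proof -
  have fP: "finite (Pow B)" using assms by simp
  have dis: "Pow B \<inter> insert a ` Pow B = {}" using assms by auto
  have inj: "inj_on (insert a) (Pow B)" using assms unfolding inj_on_def by (metis Diff_insert_absorb PowD in_mono)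
  have "(\<Sum>S\<in>Pow (insert a B). F S) = (\<Sum>S\<in>Pow B. F S) + (\<Sum>S\<in>insert a ` Pow B. F S)"
    unfolding Pow_insert using fP dis by (simp add: sum.union_disjoint)
  also have "(\<Sum>S\<in>insert a ` Pow B. F S) = (\<Sum>S\<in>Pow B. F (insert a S))"
    using inj by (simp add: sum.reindex)
  finally show ?thesis by (simp add: sum.distrib)
qed

definition DD :: "nat set \<Rightarrow> (nat set \<Rightarrow> real) \<Rightarrow> real" where
  "DD B f = (\<Sum>S\<in>Pow B. \<Sum>x\<in>B - S. 3 ^ card S * (f (insert x S) - f S)^2)"

lemma DD_insert:
  assumes B: "finite B" "a \<notin> B"
  shows "DD (insert a B) f = (\<Sum>S\<in>Pow B. 3 ^ card S * (f (insert a S) - f S)^2) + DD B f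
     + 3 * DD B (\<lambda>S. f (insert a S))"
proof -
  have "DD (insert a B) f = (\<Sum>S\<in>Pow B. (\<Sum>x\<in>insert a B - S. 3 ^ card S * (f (insert x S) - f S)^2)
      + (\<Sum>x\<in>insert a B - insert a S. 3 ^ card (insert a S) * (f (insert x (insert a S)) - f (insert a S))^2))"
    unfolding DD_def by (rule sum_Pow_insert[OF B])
  also have "\<dots> = (\<Sum>S\<in>Pow B. (3 ^ card S * (f (insert a S) - f S)^2 + (\<Sum>x\<in>B - S. 3 ^ card S * (f (insert x S) - f S)^2))
      + 3 * (\<Sum>x\<in>B - S. 3 ^ card S * (f (insert a (insert x S)) - f (insert a S))^2))"
  proof (intro sum.cong refl)
    fix S assume S: "S \<in> Pow B"
    have fS: "finite S" "a \<notin> S" using S B by (auto intro: finite_subset)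
    have e1: "insert a B - S = insert a (B - S)" using fS by auto
    have e2: "insert a B - insert a S = B - S" using B by auto
    have "(\<Sum>x\<in>insert a B - S. 3 ^ card S * (f (insert x S) - f S)^2) =
          3 ^ card S * (f (insert a S) - f S)^2 + (\<Sum>x\<in>B - S. 3 ^ card S * (f (insert x S) - f S)^2)"
      unfolding e1 using B by (simp add: sum.insert)
    moreover have "(\<Sum>x\<in>insert a B - insert a S. 3 ^ card (insert a S) * (f (insert x (insert a S)) - f (insert a S))^2)
        = 3 * (\<Sum>x\<in>B - S. 3 ^ card S * (f (insert a (insert x S)) - f (insert a S))^2)"
      unfolding e2 using fS by (simp add: sum_distrib_left insert_commute mult.assoc)
    ultimately show "(\<Sum>x\<in>insert a B - S. 3 ^ card S * (f (insert x S) - f S)^2)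
      + (\<Sum>x\<in>insert a B - insert a S. 3 ^ card (insert a S) * (f (insert x (insert a S)) - f (insert a S))^2) =
      (3 ^ card S * (f (insert a S) - f S)^2 + (\<Sum>x\<in>B - S. 3 ^ card S * (f (insert x S) - f S)^2))
      + 3 * (\<Sum>x\<in>B - S. 3 ^ card S * (f (insert a (insert x S)) - f (insert a S))^2)" by simp
  qed
  also have "\<dots> = (\<Sum>S\<in>Pow B. 3 ^ card S * (f (insert a S) - f S)^2) + DD B f
     + 3 * DD B (\<lambda>S. f (insert a S))"
    unfolding DD_def by (simp add: sum.distrib sum_distrib_left)
  finally show ?thesis .
qed

lemma efron_stein:
  fixes f :: "nat set \<Rightarrow> real"
  assumes "finite B"
  shows "4 ^ card B * (\<Sum>S\<in>Pow B. 3 ^ card S * (f S)^2) - (\<Sum>S\<in>Pow B. 3 ^ card S * f S)^2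
         \<le> 3 * 4 ^ card B / 4 * DD B f"
  using assms
proof (induction B arbitrary: f rule: finite_induct)
  case empty
  then show ?case by (simp add: DD_def power2_eq_square)
next
  case (insert a B f)
  define f1 where "f1 = (\<lambda>S. f (insert a S))"
  define Z :: real where "Z = 4 ^ card B"
  define q0 where "q0 = (\<Sum>S\<in>Pow B. 3 ^ card S * (f S)^2)"
  define q1 where "q1 = (\<Sum>S\<in>Pow B. 3 ^ card S * (f1 S)^2)"
  define a0 where "a0 = (\<Sum>S\<in>Pow B. 3 ^ card S * f S)"
  define a1 where "a1 = (\<Sum>S\<in>Pow B. 3 ^ card S * f1 S)"
  define E where "E = (\<Sum>S\<in>Pow B. 3 ^ card S * (f1 S - f S)^2)"
  have c3: "(3::real) ^ card (insert a S) = 3 * 3 ^ card S" if "S \<in> Pow B" for S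
  proof -
    have "finite S" "a \<notin> S" using that insert by (auto intro: finite_subset)
    then show ?thesis by simp
  qed
  have Q: "(\<Sum>S\<in>Pow (insert a B). 3 ^ card S * (f S)^2) = q0 + 3 * q1"
  proof -
    have "(\<Sum>S\<in>Pow (insert a B). 3 ^ card S * (f S)^2) = (\<Sum>S\<in>Pow B. 3 ^ card S * (f S)^2 + 3 ^ card (insert a S) * (f (insert a S))^2)"
      by (rule sum_Pow_insert[OF insert(1,2)])
    also have "\<dots> = (\<Sum>S\<in>Pow B. 3 ^ card S * (f S)^2 + 3 * (3 ^ card S * (f1 S)^2))"
      by (intro sum.cong refl) (simp add: c3 f1_def)
    finally show ?thesis unfolding q0_def q1_def by (simp add: sum.distrib sum_distrib_left)
  qed
  have A: "(\<Sum>S\<in>Pow (insert a B). 3 ^ card S * f S) = a0 + 3 * a1"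
  proof -
    have "(\<Sum>S\<in>Pow (insert a B). 3 ^ card S * f S) = (\<Sum>S\<in>Pow B. 3 ^ card S * f S + 3 ^ card (insert a S) * f (insert a S))"
      by (rule sum_Pow_insert[OF insert(1,2)])
    also have "\<dots> = (\<Sum>S\<in>Pow B. 3 ^ card S * f S + 3 * (3 ^ card S * f1 S))"
      by (intro sum.cong refl) (simp add: c3 f1_def)
    finally show ?thesis unfolding a0_def a1_def by (simp add: sum.distrib sum_distrib_left)
  qed
  have D: "DD (insert a B) f = E + DD B f + 3 * DD B f1"
    unfolding DD_insert[OF insert(1,2)] E_def f1_def by simp
  have cZ: "(4::real) ^ card (insert a B) = 4 * Z" unfolding Z_def using insert by simp
  have IH0: "Z * q0 - a0^2 \<le> 3 * Z / 4 * DD B f" using insert.IH[of f] unfolding Z_def q0_def a0_def by simp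
  have IH1: "Z * q1 - a1^2 \<le> 3 * Z / 4 * DD B f1" using insert.IH[of f1] unfolding Z_def q1_def a1_def by simp
  have CS: "(a1 - a0)^2 \<le> Z * E"
  proof -
    have "(\<Sum>S\<in>Pow B. 3 ^ card S * (f1 S - f S))^2 \<le> Z * (\<Sum>S\<in>Pow B. 3 ^ card S * (f1 S - f S)^2)"
      by (rule weighted_CS) (use insert sum_pow3[of B] in \<open>auto simp: Z_def\<close>)
    moreover have "(\<Sum>S\<in>Pow B. 3 ^ card S * (f1 S - f S)) = a1 - a0"
      unfolding a1_def a0_def by (simp add: algebra_simps sum_subtractf)
    ultimately show ?thesis unfolding E_def by simp
  qed
  have id: "4 * Z * (q0 + 3 * q1) - (a0 + 3 * a1)^2 = 4 * (Z * q0 - a0^2) + 12 * (Z * q1 - a1^2) + 3 * (a1 - a0)^2"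
    by (simp add: power2_eq_square algebra_simps)
  have "4 * Z * (q0 + 3 * q1) - (a0 + 3 * a1)^2 \<le> 3 * (4 * Z) / 4 * (E + DD B f + 3 * DD B f1)"
    unfolding id using IH0 IH1 CS by (simp add: algebra_simps)
  then show ?case unfolding Q A D cZ .
qed


lemma sq_diff_le: "((a::real) - b)^2 \<le> 2 * a^2 + 2 * b^2"
proof -
  have "2 * a^2 + 2 * b^2 - (a - b)^2 = (a + b)^2" by (simp add: power2_eq_square algebra_simps)
  moreover have "(a + b)^2 \<ge> 0" by simp
  ultimately show ?thesis by linarith
qed

lemma aux_cancel:
  fixes Z v2 X T :: real
  assumes Z: "Z \<ge> 1" and h: "Z * (v2 + X) - v2 \<le> 3 * Z / 4 * T" and v: "v2 \<ge> 0"
  shows "X \<le> 3 / 4 * T"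
proof -
  have "(Z - 1) * v2 \<ge> 0" using Z v by simp
  moreover have "Z * (v2 + X) - v2 = Z * X + (Z - 1) * v2" by (simp add: algebra_simps)
  moreover have "3 * Z / 4 * T = Z * (3 / 4 * T)" by simp
  ultimately have "Z * X \<le> Z * (3 / 4 * T)" using h by linarith
  then show ?thesis using Z by simp
qed

definition DW :: "nat \<Rightarrow> (nat set \<Rightarrow> real) \<Rightarrow> real" where
  "DW N g = (\<Sum>S\<in>Omega N. \<Sum>x\<in>{1..N} - S. 3 ^ card S * (g (insert x S) - g S)^2)"

lemma DW_nonneg: "DW N g \<ge> 0"
  unfolding DW_def by (intro sum_nonneg) auto

lemma singletons_bound:
  fixes g :: "nat set \<Rightarrow> real"
  assumes N: "N \<ge> 2"
  shows "(\<Sum>x\<in>{1..N}. (g {x} - g {1})^2) \<le> 2/3 * DW N g"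
proof -
  let ?A = "{1..N}"
  define H where "H y = (\<Sum>x\<in>?A - {y}. 3 * (g (insert x {y}) - g {y})^2)" for y
  have one: "1 \<in> ?A" using N by auto
  have "(\<Sum>S\<in>(\<lambda>y. {y}) ` ?A. \<Sum>x\<in>?A - S. 3 ^ card S * (g (insert x S) - g S)^2) \<le> DW N g"
    unfolding DW_def by (rule sum_mono2[OF finite_Omega]) (auto simp: Omega_iff intro!: sum_nonneg)
  moreover have "(\<Sum>S\<in>(\<lambda>y. {y}) ` ?A. \<Sum>x\<in>?A - S. 3 ^ card S * (g (insert x S) - g S)^2) = (\<Sum>y\<in>?A. H y)"
    by (subst sum.reindex) (auto simp: inj_on_def H_def)
  ultimately have D1: "(\<Sum>y\<in>?A. H y) \<le> DW N g" by simp
  have "(\<Sum>y\<in>?A. H y) = H 1 + (\<Sum>y\<in>?A - {1}. H y)" using one by (simp add: sum.remove)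
  moreover have "(\<Sum>y\<in>?A - {1}. 3 * (g (insert 1 {y}) - g {y})^2) \<le> (\<Sum>y\<in>?A - {1}. H y)"
  proof (rule sum_mono)
    fix y assume y: "y \<in> ?A - {1}"
    show "3 * (g (insert 1 {y}) - g {y})^2 \<le> H y"
      unfolding H_def using y one
      by (intro member_le_sum[where f = "\<lambda>x. 3 * (g (insert x {y}) - g {y})^2"]) auto
  qed
  ultimately have D2: "H 1 + (\<Sum>y\<in>?A - {1}. 3 * (g (insert 1 {y}) - g {y})^2) \<le> DW N g" using D1 by linarith
  have "(\<Sum>x\<in>?A. (g {x} - g {1})^2) = (\<Sum>x\<in>?A - {1}. (g {x} - g {1})^2)"
    using sum.remove[of ?A 1 "\<lambda>x. (g {x} - g {1})^2"] one by simp
  also have "\<dots> \<le> (\<Sum>x\<in>?A - {1}. 2 * (g (insert x {1}) - g {1})^2 + 2 * (g (insert 1 {x}) - g {x})^2)"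
  proof (rule sum_mono)
    fix x :: nat
    have e: "insert x {1} = insert 1 {x}" by auto
    have "(g {x} - g {1})^2 = ((g (insert x {1}) - g {1}) - (g (insert 1 {x}) - g {x}))^2"
      unfolding e by simp
    also have "\<dots> \<le> 2 * (g (insert x {1}) - g {1})^2 + 2 * (g (insert 1 {x}) - g {x})^2"
      by (rule sq_diff_le)
    finally show "(g {x} - g {1})^2 \<le> 2 * (g (insert x {1}) - g {1})^2 + 2 * (g (insert 1 {x}) - g {x})^2" .
  qed
  also have "\<dots> = 2/3 * (H 1 + (\<Sum>y\<in>?A - {1}. 3 * (g (insert 1 {y}) - g {y})^2))"
    unfolding H_def by (simp add: sum.distrib sum_distrib_left[symmetric])
  also have "\<dots> \<le> 2/3 * DW N g" using D2 by simp
  finally show ?thesis .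
qed

lemma poincare:
  fixes g :: "nat set \<Rightarrow> real"
  assumes N: "N \<ge> 2" and m: "(\<Sum>S\<in>Omega N. 3 ^ card S * g S) = 0"
  shows "(\<Sum>S\<in>Omega N. 3 ^ card S * (g S)^2) \<le> 5/4 * DW N g"
proof -
  let ?A = "{1..N}"
  define v where "v = g {1}"
  define G where "G = g({} := v)"
  define X where "X = (\<Sum>S\<in>Omega N. 3 ^ card S * (g S)^2)"
  have GS: "G S = g S" if "S \<in> Omega N" for S using that by (auto simp: G_def Omega_iff)
  have GI: "G (insert x S) = g (insert x S)" for x S by (simp add: G_def)
  have es: "4 ^ card ?A * (\<Sum>S\<in>Pow ?A. 3 ^ card S * (G S)^2) - (\<Sum>S\<in>Pow ?A. 3 ^ card S * G S)^2
         \<le> 3 * 4 ^ card ?A / 4 * DD ?A G" by (rule efron_stein) simp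
  have s1: "(\<Sum>S\<in>Pow ?A. 3 ^ card S * (G S)^2) = v^2 + X"
    unfolding sum_Omega_split X_def
    by (simp add: G_def) (intro sum.cong refl, auto simp: Omega_iff)
  have s2: "(\<Sum>S\<in>Pow ?A. 3 ^ card S * G S) = v"
  proof -
    have "(\<Sum>S\<in>Omega N. 3 ^ card S * G S) = (\<Sum>S\<in>Omega N. 3 ^ card S * g S)"
      by (intro sum.cong refl) (simp add: GS)
    then show ?thesis unfolding sum_Omega_split using m by (simp add: G_def)
  qed
  have s3: "DD ?A G = (\<Sum>x\<in>?A. (g {x} - v)^2) + DW N g"
  proof -
    have "(\<Sum>S\<in>Omega N. \<Sum>x\<in>?A - S. 3 ^ card S * (G (insert x S) - G S)^2) = DW N g"
      unfolding DW_def by (intro sum.cong refl) (simp add: GS GI)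
    then show ?thesis unfolding DD_def sum_Omega_split by (simp add: G_def)
  qed
  have "4 ^ N * (v^2 + X) - v^2 \<le> 3 * 4 ^ N / 4 * ((\<Sum>x\<in>?A. (g {x} - v)^2) + DW N g)"
    using es unfolding s1 s2 s3 by simp
  then have "X \<le> 3 / 4 * ((\<Sum>x\<in>?A. (g {x} - v)^2) + DW N g)"
    by (rule aux_cancel[rotated]) simp_all
  also have "\<dots> \<le> 3/4 * (2/3 * DW N g + DW N g)"
    using singletons_bound[OF N, of g] unfolding v_def by simp
  finally show ?thesis unfolding X_def by simp
qed


lemma reindex_down:
  fixes K :: "nat set \<Rightarrow> nat \<Rightarrow> real"
  assumes K0: "\<And>x. K {x} x = 0"
  shows "(\<Sum>S\<in>Omega N. \<Sum>x\<in>S. K S x) = (\<Sum>S\<in>Omega N. \<Sum>x\<in>{1..N} - S. K (insert x S) x)"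
proof -
  let ?A = "{1..N}"
  have finS: "\<forall>S\<in>Omega N. finite S" by (metis Omega_iff finite_atLeastAtMost finite_subset)
  have finD: "\<forall>S\<in>Omega N. finite (?A - S)" by auto
  have "(\<Sum>S\<in>Omega N. \<Sum>x\<in>S. K S x) = (\<Sum>(S,x)\<in>Sigma (Omega N) (\<lambda>S. S). K S x)"
    by (rule sum.Sigma[OF finite_Omega finS])
  also have "\<dots> = (\<Sum>(S,x)\<in>{(S,x)\<in>Sigma (Omega N) (\<lambda>S. S). S \<noteq> {x}}. K S x)"
    using finS by (intro sum.mono_neutral_right finite_SigmaI finite_Omega) (auto simp: K0)
  also have "\<dots> = (\<Sum>(S,x)\<in>Sigma (Omega N) (\<lambda>S. ?A - S). K (insert x S) x)"
    by (rule sum.reindex_bij_witness[where j = "\<lambda>(S,x). (S - {x}, x)" and i = "\<lambda>(S,x). (insert x S, x)"])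
       (auto simp: Omega_iff insert_absorb subset_iff)
  also have "\<dots> = (\<Sum>S\<in>Omega N. \<Sum>x\<in>?A - S. K (insert x S) x)"
    by (rule sum.Sigma[OF finite_Omega finD, symmetric])
  finally show ?thesis .
qed

lemma dirichlet:
  fixes g :: "nat set \<Rightarrow> real"
  assumes N: "N \<ge> 2"
  shows "(\<Sum>S\<in>Omega N. 3 ^ card S * g S * (g S - (\<Sum>T\<in>Omega N. Qtrans N S T * g T))) =
    (\<Sum>S\<in>Omega N. \<Sum>x\<in>{1..N} - S. 4/3 * real (card S) * 3 ^ card S * (g (insert x S) - g S)^2) / (real N * (real N - 1))"
proof -
  let ?A = "{1..N}"
  let ?D = "real N * (real N - 1)"
  have Dpos: "?D > 0" using N by simp
  define K where "K S x = 4/9 * (real (card S) - 1) * 3 ^ card S * g S * (g S - g (S - {x}))" for S x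
  have K0: "K {x} x = 0" for x by (simp add: K_def)
  have step1: "3 ^ card S * g S * (g S - (\<Sum>T\<in>Omega N. Qtrans N S T * g T)) =
      ((\<Sum>x\<in>?A - S. 4/3 * real (card S) * 3 ^ card S * g S * (g S - g (insert x S))) + (\<Sum>x\<in>S. K S x)) / ?D"
    if S: "S \<in> Omega N" for S
  proof -
    have "3 ^ card S * g S * (g S - (\<Sum>T\<in>Omega N. Qtrans N S T * g T)) =
      3 ^ card S * g S * (- (4/3 * real (card S) * (\<Sum>x\<in>?A - S. g (insert x S) - g S)
     + 4/9 * (real (card S) - 1) * (\<Sum>x\<in>S. g (S - {x}) - g S)) / ?D)"
      unfolding Q_op2[OF S N] using Dpos by (simp add: field_simps)
    also have "\<dots> = (3 ^ card S * g S * (4/3 * real (card S) * (\<Sum>x\<in>?A - S. g S - g (insert x S)))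
       + 3 ^ card S * g S * (4/9 * (real (card S) - 1) * (\<Sum>x\<in>S. g S - g (S - {x})))) / ?D"
    proof -
      have aux2: "(w::real) * g0 * (-(a*U + b*V)/D) = (w*g0*(a*U') + w*g0*(b*V'))/D" if "U' = -U" "V' = -V" for w g0 a b U V U' V' D
        using that by (simp add: algebra_simps)
      show ?thesis
        by (rule aux2) (simp_all add: sum_negf[symmetric])
    qed
    also have "\<dots> = ((\<Sum>x\<in>?A - S. 4/3 * real (card S) * 3 ^ card S * g S * (g S - g (insert x S))) + (\<Sum>x\<in>S. K S x)) / ?D"
    proof -
      have p1: "3 ^ card S * g S * (4/3 * real (card S) * (\<Sum>x\<in>?A - S. g S - g (insert x S)))
         = (\<Sum>x\<in>?A - S. 4/3 * real (card S) * 3 ^ card S * g S * (g S - g (insert x S)))"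
        by (subst sum_distrib_left, subst sum_distrib_left, intro sum.cong refl) simp
      have p2: "3 ^ card S * g S * (4/9 * (real (card S) - 1) * (\<Sum>x\<in>S. g S - g (S - {x})))
         = (\<Sum>x\<in>S. K S x)"
        unfolding K_def by (subst sum_distrib_left, subst sum_distrib_left, intro sum.cong refl) simp
      show ?thesis unfolding p1 p2 ..
    qed
    finally show ?thesis .
  qed
  have step2: "K (insert x S) x = 4/3 * real (card S) * 3 ^ card S * g (insert x S) * (g (insert x S) - g S)"
    if S: "S \<in> Omega N" and x: "x \<in> ?A - S" for S x
  proof -
    have "finite S" using S by (auto simp: Omega_iff intro: finite_subset)
    then have "card (insert x S) = card S + 1" "insert x S - {x} = S" using x by auto
    then show ?thesis unfolding K_def by (simp add: field_simps)
  qed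
  have "(\<Sum>S\<in>Omega N. 3 ^ card S * g S * (g S - (\<Sum>T\<in>Omega N. Qtrans N S T * g T))) =
     ((\<Sum>S\<in>Omega N. \<Sum>x\<in>?A - S. 4/3 * real (card S) * 3 ^ card S * g S * (g S - g (insert x S))) + (\<Sum>S\<in>Omega N. \<Sum>x\<in>S. K S x)) / ?D"
    by (simp add: step1 sum_divide_distrib[symmetric] sum.distrib cong: sum.cong)
  also have "(\<Sum>S\<in>Omega N. \<Sum>x\<in>S. K S x) = (\<Sum>S\<in>Omega N. \<Sum>x\<in>?A - S. 4/3 * real (card S) * 3 ^ card S * g (insert x S) * (g (insert x S) - g S))"
    unfolding reindex_down[of K, OF K0] by (intro sum.cong refl) (simp add: step2)
  also have "(\<Sum>S\<in>Omega N. \<Sum>x\<in>?A - S. 4/3 * real (card S) * 3 ^ card S * g S * (g S - g (insert x S))) +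
      (\<Sum>S\<in>Omega N. \<Sum>x\<in>?A - S. 4/3 * real (card S) * 3 ^ card S * g (insert x S) * (g (insert x S) - g S))
    = (\<Sum>S\<in>Omega N. \<Sum>x\<in>?A - S. 4/3 * real (card S) * 3 ^ card S * (g (insert x S) - g S)^2)"
  proof -
    have aux3: "c * w * a * (a - b) + c * w * b * (b - a) = c * w * (b - a)^2" for c w a b :: real
      by (simp add: power2_eq_square algebra_simps)
    show ?thesis unfolding sum.distrib[symmetric] by (intro sum.cong refl) (rule aux3)
  qed
  finally show ?thesis .
qed


abbreviation QF :: "nat \<Rightarrow> (nat set \<Rightarrow> real) \<Rightarrow> nat set \<Rightarrow> real" where
  "QF N g S \<equiv> (\<Sum>T\<in>Omega N. Qtrans N S T * g T)"

lemma rev_w: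
  assumes N: "N \<ge> 2" and S: "S \<in> Omega N" and T: "T \<in> Omega N"
  shows "(3::real) ^ card S * Qtrans N S T = 3 ^ card T * Qtrans N T S"
proof -
  have pos: "(4::real) ^ N - 1 > 0" using N by (simp add: one_less_power)
  have "Mdist N S * Qtrans N S T = Mdist N T * Qtrans N T S"
    using reversible[OF N] S T unfolding reversible_wrt_def by auto
  then show ?thesis unfolding Mdist_def using pos by (simp add: field_simps)
qed

lemma stat_w:
  assumes N: "N \<ge> 2"
  shows "(\<Sum>S\<in>Omega N. 3 ^ card S * QF N f S) = (\<Sum>S\<in>Omega N. 3 ^ card S * f S)"
proof -
  have "(\<Sum>S\<in>Omega N. 3 ^ card S * QF N f S) = (\<Sum>S\<in>Omega N. \<Sum>T\<in>Omega N. 3 ^ card S * Qtrans N S T * f T)"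
    by (simp add: sum_distrib_left mult.assoc)
  also have "\<dots> = (\<Sum>T\<in>Omega N. \<Sum>S\<in>Omega N. 3 ^ card S * Qtrans N S T * f T)"
    by (rule sum.swap)
  also have "\<dots> = (\<Sum>T\<in>Omega N. \<Sum>S\<in>Omega N. 3 ^ card T * f T * Qtrans N T S)"
  proof (intro sum.cong refl)
    fix T S assume T: "T \<in> Omega N" and S: "S \<in> Omega N"
    show "3 ^ card S * Qtrans N S T * f T = 3 ^ card T * f T * Qtrans N T S"
      using rev_w[OF N S T] by (simp add: mult_ac)
  qed
  also have "\<dots> = (\<Sum>T\<in>Omega N. 3 ^ card T * f T)"
    by (intro sum.cong refl) (simp add: sum_distrib_left[symmetric] Q_rowsum[OF _ N])
  finally show ?thesis .
qed

lemma self_adj: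
  assumes N: "N \<ge> 2"
  shows "(\<Sum>S\<in>Omega N. 3 ^ card S * f1 S * QF N f2 S) = (\<Sum>S\<in>Omega N. 3 ^ card S * QF N f1 S * f2 S)"
proof -
  have "(\<Sum>S\<in>Omega N. 3 ^ card S * QF N f1 S * f2 S) = (\<Sum>S\<in>Omega N. \<Sum>T\<in>Omega N. 3 ^ card S * Qtrans N S T * f1 T * f2 S)"
    by (simp add: sum_distrib_left sum_distrib_right mult_ac)
  also have "\<dots> = (\<Sum>T\<in>Omega N. \<Sum>S\<in>Omega N. 3 ^ card S * Qtrans N S T * f1 T * f2 S)"
    by (rule sum.swap)
  also have "\<dots> = (\<Sum>T\<in>Omega N. \<Sum>S\<in>Omega N. 3 ^ card T * Qtrans N T S * f1 T * f2 S)"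
    by (intro sum.cong refl) (simp add: rev_w[OF N])
  also have "\<dots> = (\<Sum>S\<in>Omega N. 3 ^ card S * f1 S * QF N f2 S)"
    by (simp add: sum_distrib_left mult_ac)
  finally show ?thesis ..
qed

lemma eig_bound:
  fixes f :: "nat set \<Rightarrow> real"
  assumes N: "N \<ge> 2" and eig: "\<forall>S\<in>Omega N. QF N f S = lam * f S"
    and nc: "\<not> (\<exists>c. \<forall>S\<in>Omega N. f S = c)"
  shows "lam \<le> 1 - 4 / (9 * real N * (real N - 1))"
proof -
  let ?w = "\<lambda>S. (3::real) ^ card S"
  define Z :: real where "Z = 4 ^ N - 1"
  have Zpos: "Z > 0" unfolding Z_def using N by (simp add: one_less_power)
  have sw: "(\<Sum>S\<in>Omega N. ?w S) = Z" unfolding Z_def by (rule sum_Omega_w)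
  have "lam * (\<Sum>S\<in>Omega N. ?w S * f S) = (\<Sum>S\<in>Omega N. ?w S * QF N f S)"
    using eig by (simp add: sum_distrib_left mult_ac)
  also have "\<dots> = (\<Sum>S\<in>Omega N. ?w S * f S)" by (rule stat_w[OF N])
  finally have lm: "lam * (\<Sum>S\<in>Omega N. ?w S * f S) = (\<Sum>S\<in>Omega N. ?w S * f S)" .
  define m where "m = (\<Sum>S\<in>Omega N. ?w S * f S) / Z"
  have lmm: "lam * m = m"
  proof (cases "lam = 1")
    case False
    then have "(\<Sum>S\<in>Omega N. ?w S * f S) = 0" using lm
      by (metis mult_cancel_right1 mult.commute)
    then show ?thesis unfolding m_def by simp
  qed simp
  define g where "g S = f S - m" for S
  have eg: "QF N g S = lam * g S" if S: "S \<in> Omega N" for S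
  proof -
    have "QF N g S = QF N f S - m * (\<Sum>T\<in>Omega N. Qtrans N S T)"
      unfolding g_def by (simp add: algebra_simps sum_subtractf sum_distrib_left)
    also have "\<dots> = lam * f S - m" using eig S Q_rowsum[OF S N] by simp
    also have "\<dots> = lam * g S" unfolding g_def using lmm by (simp add: algebra_simps)
    finally show ?thesis .
  qed
  have mean0: "(\<Sum>S\<in>Omega N. ?w S * g S) = 0"
  proof -
    have "(\<Sum>S\<in>Omega N. ?w S * g S) = (\<Sum>S\<in>Omega N. ?w S * f S) - m * (\<Sum>S\<in>Omega N. ?w S)"
      unfolding g_def by (simp add: algebra_simps sum_subtractf sum_distrib_left)
    then show ?thesis unfolding sw m_def using Zpos by simp
  qed
  obtain S0 where S0: "S0 \<in> Omega N" "g S0 \<noteq> 0"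
  proof -
    have "\<not> (\<forall>S\<in>Omega N. f S = m)" using nc by blast
    then show ?thesis using that unfolding g_def by auto
  qed
  define X where "X = (\<Sum>S\<in>Omega N. ?w S * (g S)^2)"
  have Xpos: "X > 0" unfolding X_def
    by (rule sum_pos2[OF finite_Omega S0(1)]) (use S0 in auto)
  define DS where "DS = (\<Sum>S\<in>Omega N. \<Sum>x\<in>{1..N} - S. 4/3 * real (card S) * 3 ^ card S * (g (insert x S) - g S)^2)"
  define D where "D = real N * (real N - 1)"
  have Dpos: "D > 0" unfolding D_def using N by simp
  have "(\<Sum>S\<in>Omega N. ?w S * g S * (g S - QF N g S)) = (1 - lam) * X"
    unfolding X_def using eg by (simp add: sum_distrib_left power2_eq_square algebra_simps cong: sum.cong)
  moreover have "(\<Sum>S\<in>Omega N. ?w S * g S * (g S - QF N g S)) = DS / D"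
    unfolding DS_def D_def by (rule dirichlet[OF N])
  ultimately have e1: "(1 - lam) * X = DS / D" by simp
  have e2: "DS \<ge> 4/3 * DW N g"
    unfolding DS_def DW_def sum_distrib_left
  proof (intro sum_mono)
    fix S x assume S: "S \<in> Omega N"
    have "finite S" "S \<noteq> {}" using S by (auto simp: Omega_iff intro: finite_subset)
    then have "real (card S) \<ge> 1" by (simp add: Suc_leI card_gt_0_iff)
    moreover have "(0::real) \<le> 3 ^ card S * (g (insert x S) - g S)^2" by simp
    ultimately have "1 * (3 ^ card S * (g (insert x S) - g S)^2) \<le> real (card S) * (3 ^ card S * (g (insert x S) - g S)^2)"
      by (rule mult_right_mono)
    then show "4/3 * (3 ^ card S * (g (insert x S) - g S)^2) \<le> 4/3 * real (card S) * 3 ^ card S * (g (insert x S) - g S)^2"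
      by (simp add: mult_ac)
  qed
  have e3: "X \<le> 5/4 * DW N g" unfolding X_def by (rule poincare[OF N mean0])
  have "(1 - lam) * X \<ge> (16/15 / D) * X"
  proof -
    have "DS / D \<ge> (4/3 * (4/5 * X)) / D"
      using e2 e3 Dpos by (intro divide_right_mono) auto
    then show ?thesis using e1 by simp
  qed
  then have "1 - lam \<ge> 16/15 / D" using Xpos by (rule mult_right_le_imp_le)
  moreover have "16/15 / D \<ge> 4/9 / D" using Dpos by (intro divide_right_mono) auto
  ultimately have "lam \<le> 1 - 4/9 / D" by linarith
  then show ?thesis unfolding D_def by (simp add: field_simps)
qed


interpretation fv: vector_space "\<lambda>(r::real) (f::nat set \<Rightarrow> real) x. r * f x"
  by unfold_locales (auto simp: fun_eq_iff algebra_simps)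

lemma fun_sum_apply: "(sum \<phi> V) x = (\<Sum>v\<in>V. \<phi> v x)" for \<phi> :: "'a \<Rightarrow> nat set \<Rightarrow> real"
  by (induction V rule: infinite_finite_induct) auto

lemma eig_ortho:
  assumes N: "N \<ge> 2" and e1: "is_eigenpair N l1 f1" and e2: "is_eigenpair N l2 f2" and ne: "l1 \<noteq> l2"
  shows "(\<Sum>S\<in>Omega N. 3 ^ card S * f1 S * f2 S) = 0"
proof -
  have q1: "\<forall>S\<in>Omega N. QF N f1 S = l1 * f1 S" and q2: "\<forall>S\<in>Omega N. QF N f2 S = l2 * f2 S"
    using e1 e2 unfolding is_eigenpair_def by auto
  have "l2 * (\<Sum>S\<in>Omega N. 3 ^ card S * f1 S * f2 S) = (\<Sum>S\<in>Omega N. 3 ^ card S * f1 S * QF N f2 S)"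
    using q2 by (simp add: sum_distrib_left mult_ac)
  also have "\<dots> = (\<Sum>S\<in>Omega N. 3 ^ card S * QF N f1 S * f2 S)" by (rule self_adj[OF N])
  also have "\<dots> = l1 * (\<Sum>S\<in>Omega N. 3 ^ card S * f1 S * f2 S)"
    using q1 by (simp add: sum_distrib_left mult_ac)
  finally show ?thesis using ne by simp
qed

lemma eig_finite:
  assumes N: "N \<ge> 2"
  shows "finite {lam. \<exists>f. is_eigenpair N lam f}"
proof (rule ccontr)
  let ?E = "{lam. \<exists>f. is_eigenpair N lam f}"
  assume inf: "infinite ?E"
  define d where "d = card (Omega N)"
  obtain L where L: "finite L" "card L = Suc d" "L \<subseteq> ?E"
    using infinite_arbitrarily_large[OF inf] by blast
  define F where "F l = (SOME f. is_eigenpair N l f)" for l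
  have eF: "is_eigenpair N l (F l)" if "l \<in> L" for l
  proof -
    have "l \<in> ?E" using L(3) that by blast
    then obtain f where "is_eigenpair N l f" by blast
    then show ?thesis unfolding F_def by (rule someI[where P="is_eigenpair N l"])
  qed
  define vec where "vec l = (\<lambda>S. if S \<in> Omega N then F l S else (0::real))" for l
  define ip where "ip u v = (\<Sum>S\<in>Omega N. 3 ^ card S * u S * v S)" for u v :: "nat set \<Rightarrow> real"
  have ipvec: "ip (vec l1) (vec l2) = (\<Sum>S\<in>Omega N. 3 ^ card S * F l1 S * F l2 S)" for l1 l2
    unfolding ip_def vec_def by (intro sum.cong refl) simp
  have ipvv: "ip (vec l) (vec l) > 0" if l: "l \<in> L" for l
  proof -
    obtain S where S: "S \<in> Omega N" "F l S \<noteq> 0" using eF[OF l] unfolding is_eigenpair_def by auto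
    show ?thesis unfolding ipvec
      by (rule sum_pos2[OF finite_Omega S(1)]) (use S in \<open>auto simp: mult.assoc zero_less_mult_iff\<close>)
  qed
  have ip0: "ip (vec l1) (vec l2) = 0" if "l1 \<in> L" "l2 \<in> L" "l1 \<noteq> l2" for l1 l2
    unfolding ipvec using eig_ortho[OF N eF eF] that by simp
  have inj: "inj_on vec L"
  proof (rule inj_onI)
    fix l1 l2 assume l: "l1 \<in> L" "l2 \<in> L" "vec l1 = vec l2"
    show "l1 = l2"
    proof (rule ccontr)
      assume "l1 \<noteq> l2"
      then have "ip (vec l1) (vec l2) = 0" using ip0 l(1,2) by blast
      then show False using ipvv[OF l(1)] l(3) by simp
    qed
  qed
  define V where "V = vec ` L"
  have cV: "card V = Suc d" unfolding V_def using card_image[OF inj] L by simp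
  have fV: "finite V" unfolding V_def using L by simp
  have indep: "\<not> fv.dependent V"
  proof
    assume "fv.dependent V"
    then obtain u v0 where v0: "v0 \<in> V" "u v0 \<noteq> 0" and s0: "(\<Sum>v\<in>V. (\<lambda>x. u v * v x)) = 0"
      using fv.dependent_finite[OF fV] by auto
    obtain l0 where l0: "l0 \<in> L" "v0 = vec l0" using v0 unfolding V_def by auto
    have "0 = ip v0 (\<Sum>v\<in>V. (\<lambda>x. u v * v x))" unfolding s0 ip_def by simp
    also have "\<dots> = (\<Sum>v\<in>V. u v * ip v0 v)"
      unfolding ip_def fun_sum_apply by (simp add: sum_distrib_left sum_distrib_right mult_ac sum.swap[of _ V])
    also have "\<dots> = u v0 * ip v0 v0 + (\<Sum>v\<in>V - {v0}. u v * ip v0 v)"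
      using fV v0 by (simp add: sum.remove)
    also have "(\<Sum>v\<in>V - {v0}. u v * ip v0 v) = 0"
    proof (intro sum.neutral ballI)
      fix v assume v: "v \<in> V - {v0}"
      then obtain l where l: "l \<in> L" "v = vec l" unfolding V_def by auto
      then have "l \<noteq> l0" using v l0 by auto
      then show "u v * ip v0 v = 0" using ip0[OF l0(1) l(1)] l l0 by simp
    qed
    finally have "u v0 * ip v0 v0 = 0" by simp
    then show False using v0(2) ipvv[OF l0(1)] l0 by simp
  qed
  define \<delta> where "\<delta> S0 = (\<lambda>S::nat set. if S = S0 then 1 else (0::real))" for S0 :: "nat set"
  have span: "V \<subseteq> fv.span (\<delta> ` Omega N)"
  proof
    fix v assume "v \<in> V"
    then obtain l where l: "v = vec l" unfolding V_def by auto
    have "v = (\<Sum>S0\<in>Omega N. (\<lambda>x. vec l S0 * \<delta> S0 x))"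
      unfolding l fun_eq_iff fun_sum_apply
    proof
      fix x
      have "(\<Sum>S0\<in>Omega N. vec l S0 * \<delta> S0 x) = (\<Sum>S0\<in>Omega N. if S0 = x then vec l S0 else 0)"
        by (intro sum.cong refl) (auto simp: \<delta>_def)
      also have "\<dots> = vec l x" using finite_Omega by (simp add: sum.delta vec_def)
      finally show "vec l x = (\<Sum>S0\<in>Omega N. vec l S0 * \<delta> S0 x)" ..
    qed
    also have "\<dots> \<in> fv.span (\<delta> ` Omega N)"
      by (intro fv.span_sum fv.span_scale fv.span_base) auto
    finally show "v \<in> fv.span (\<delta> ` Omega N)" .
  qed
  have "card V \<le> card (\<delta> ` Omega N)"
    using fv.independent_span_bound[OF _ indep span] finite_Omega by simp
  also have "\<dots> \<le> d" unfolding d_def by (rule card_image_le[OF finite_Omega])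
  finally show False using cV by simp
qed


definition ind :: "nat \<Rightarrow> nat set \<Rightarrow> real" where
  "ind x S = (if x \<in> S then 1 else 0)"

definition pp :: "nat \<Rightarrow> nat set \<Rightarrow> real" where
  "pp k S = (\<Prod>j<k. ind (2*j+1) S - ind (2*j+2) S)"

lemma pp_Suc: "pp (Suc k) S = pp k S * (ind (2*k+1) S - ind (2*k+2) S)"
  unfolding pp_def by simp

lemma pp_insert_big: "x > 2*k \<Longrightarrow> pp k (insert x S) = pp k S"
  unfolding pp_def ind_def by (intro prod.cong refl) auto

lemma pp_remove_big: "x > 2*k \<Longrightarrow> pp k (S - {x}) = pp k S"
  unfolding pp_def ind_def by (intro prod.cong refl) auto

lemma ivl_Suc2: "{1..Suc (Suc (2*k))} = insert (2*k+2) (insert (2*k+1) {1..2*k})"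
  by auto

lemma K1: "(\<Sum>x\<in>{1..2*k}. if x \<notin> S then pp k (insert x S) else 0) = 0"
proof (induction k)
  case 0
  then show ?case by simp
next
  case (Suc k)
  let ?d = "\<lambda>T. ind (2*k+1) T - ind (2*k+2) T"
  have "(\<Sum>x\<in>{1..2*k}. if x \<notin> S then pp (Suc k) (insert x S) else 0)
      = (\<Sum>x\<in>{1..2*k}. ?d S * (if x \<notin> S then pp k (insert x S) else 0))"
    unfolding pp_Suc by (intro sum.cong refl) (auto simp: ind_def)
  also have "\<dots> = 0" using Suc.IH by (simp add: sum_distrib_left[symmetric])
  finally have z: "(\<Sum>x\<in>{1..2*k}. if x \<notin> S then pp (Suc k) (insert x S) else 0) = 0" .
  have "2 * Suc k = Suc (Suc (2*k))" by simp
  then show ?case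
    unfolding ivl_Suc2 using z
    by (simp add: pp_Suc pp_insert_big ind_def)
qed

lemma K2: "(\<Sum>x\<in>{1..2*k}. if x \<in> S then pp k (S - {x}) else 0) = 0"
proof (induction k)
  case 0
  then show ?case by simp
next
  case (Suc k)
  let ?d = "\<lambda>T. ind (2*k+1) T - ind (2*k+2) T"
  have "(\<Sum>x\<in>{1..2*k}. if x \<in> S then pp (Suc k) (S - {x}) else 0)
      = (\<Sum>x\<in>{1..2*k}. ?d S * (if x \<in> S then pp k (S - {x}) else 0))"
    unfolding pp_Suc by (intro sum.cong refl) (auto simp: ind_def)
  also have "\<dots> = 0" using Suc.IH by (simp add: sum_distrib_left[symmetric])
  finally have z: "(\<Sum>x\<in>{1..2*k}. if x \<in> S then pp (Suc k) (S - {x}) else 0) = 0" .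
  have "2 * Suc k = Suc (Suc (2*k))" by simp
  then show ?case
    unfolding ivl_Suc2 using z
    by (simp add: pp_Suc pp_remove_big ind_def)
qed

lemma K3: "pp k S \<noteq> 0 \<Longrightarrow> (\<Sum>x\<in>{1..2*k}. ind x S) = real k"
proof (induction k)
  case 0
  then show ?case by simp
next
  case (Suc k)
  have nz: "pp k S \<noteq> 0" "ind (2*k+1) S - ind (2*k+2) S \<noteq> 0" using Suc.prems unfolding pp_Suc by auto
  have "2 * Suc k = Suc (Suc (2*k))" by simp
  then show ?case unfolding ivl_Suc2 using Suc.IH[OF nz(1)] nz(2)
    by (simp add: ind_def split: if_splits)
qed

lemma card_ind:
  assumes "finite A" "S \<subseteq> A"
  shows "real (card S) = (\<Sum>x\<in>A. ind x S)"
proof -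
  have "(\<Sum>x\<in>A. ind x S) = (\<Sum>x\<in>{x\<in>A. x \<in> S}. 1)"
    unfolding ind_def by (rule sum.inter_filter[symmetric]) (use assms in auto)
  also have "{x\<in>A. x \<in> S} = S" using assms by auto
  finally show ?thesis by simp
qed

lemma sum_diff_if:
  fixes F :: "nat \<Rightarrow> real"
  assumes "finite A"
  shows "(\<Sum>x\<in>A - S. F x) = (\<Sum>x\<in>A. if x \<notin> S then F x else 0)"
proof -
  have "(\<Sum>x\<in>A. if x \<notin> S then F x else 0) = (\<Sum>x\<in>{x\<in>A. x \<notin> S}. F x)"
    by (rule sum.inter_filter[symmetric]) (use assms in auto)
  moreover have "{x\<in>A. x \<notin> S} = A - S" by auto
  ultimately show ?thesis by simp
qed

lemma sum_sub_if:
  fixes F :: "nat \<Rightarrow> real"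
  assumes "finite A" "S \<subseteq> A"
  shows "(\<Sum>x\<in>S. F x) = (\<Sum>x\<in>A. if x \<in> S then F x else 0)"
proof -
  have "(\<Sum>x\<in>A. if x \<in> S then F x else 0) = (\<Sum>x\<in>{x\<in>A. x \<in> S}. F x)"
    by (rule sum.inter_filter[symmetric]) (use assms in auto)
  moreover have "{x\<in>A. x \<in> S} = S" using assms by auto
  ultimately show ?thesis by simp
qed


lemma card_Diff_real:
  assumes "S \<in> Omega N"
  shows "real (card ({1..N} - S)) = real N - real (card S)"
proof -
  have "S \<subseteq> {1..N}" "finite S" using assms by (auto simp: Omega_iff intro: finite_subset)
  moreover have "card S \<le> card {1..N}" using \<open>S \<subseteq> {1..N}\<close> by (intro card_mono) simp_all
  ultimately show ?thesis by (simp add: card_Diff_subset of_nat_diff)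
qed

lemma aux_e:
  fixes g n N D :: real
  shows "g + (4/3 * n * (- ((N - n) * g)) + 4/9 * (n - 1) * (- (n * g))) / D = g * (1 - (4/3 * n * (N - n) + 4/9 * (n - 1) * n) / D)"
proof -
  have gen: "a * n * (- ((N - n) * g)) + b * (n - 1) * (- (n * g)) = - (g * (a * n * (N - n) + b * (n - 1) * n))" for a b :: real
    by (simp add: algebra_simps)
  have "4/3 * n * (- ((N - n) * g)) + 4/9 * (n - 1) * (- (n * g)) = - (g * (4/3 * n * (N - n) + 4/9 * (n - 1) * n))"
    by (rule gen)
  moreover have "g + (- (g * Y)) / D = g * (1 - Y / D)" for Y :: real
  proof -
    have "g + (- (g * Y)) / D = g - g * Y / D" by simp
    also have "\<dots> = g * (1 - Y / D)" by (simp add: right_diff_distrib)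
    finally show ?thesis .
  qed
  ultimately show ?thesis by simp
qed

lemma eig_even:
  assumes k: "k \<ge> 1" and S: "S \<in> Omega (2*k)"
  shows "QF (2*k) (pp k) S = (1 - (4/3 * real k * real k + 4/9 * (real k - 1) * real k) / (real (2*k) * (real (2*k) - 1))) * pp k S"
proof -
  let ?N = "2*k"
  let ?A = "{1..?N}"
  let ?n = "real (card S)"
  let ?D = "real (2*k) * (real (2*k) - 1)"
  have N: "?N \<ge> 2" using k by simp
  have SA: "S \<subseteq> ?A" using S by (simp add: Omega_iff)
  have u: "(\<Sum>x\<in>?A - S. pp k (insert x S) - pp k S) = - ((real ?N - ?n) * pp k S)"
  proof -
    have "(\<Sum>x\<in>?A - S. pp k (insert x S)) = 0"
      unfolding sum_diff_if[OF finite_atLeastAtMost] by (rule K1)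
    then show ?thesis using card_Diff_real[OF S] by (simp add: sum_subtractf)
  qed
  have d: "(\<Sum>x\<in>S. pp k (S - {x}) - pp k S) = - (?n * pp k S)"
  proof -
    have "(\<Sum>x\<in>S. pp k (S - {x})) = 0"
      unfolding sum_sub_if[OF finite_atLeastAtMost SA] by (rule K2)
    then show ?thesis by (simp add: sum_subtractf)
  qed
  have "QF ?N (pp k) S = pp k S * (1 - (4/3 * ?n * (real ?N - ?n) + 4/9 * (?n - 1) * ?n) / ?D)"
    unfolding Q_op2[OF S N] u d by (rule aux_e)
  also have "\<dots> = (1 - (4/3 * real k * real k + 4/9 * (real k - 1) * real k) / ?D) * pp k S"
  proof (cases "pp k S = 0")
    case False
    have "?n = real k" using K3[OF False] card_ind[OF finite_atLeastAtMost SA] by simp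
    then show ?thesis by simp
  qed simp
  finally show ?thesis .
qed

definition hh :: "nat \<Rightarrow> nat set \<Rightarrow> real" where
  "hh k S = (if 2*k+1 \<in> S then 1 else 3)"

lemma eig_odd:
  assumes k: "k \<ge> 1" and S: "S \<in> Omega (2*k+1)"
  shows "QF (2*k+1) (\<lambda>T. pp k T * hh k T) S =
     (1 - 4/9 * real k * (4 * real k + 1) / (real (2*k+1) * (real (2*k+1) - 1))) * (pp k S * hh k S)"
proof -
  let ?N = "2*k+1"
  let ?A = "{1..?N}"
  let ?B = "{1..2*k}"
  let ?n = "real (card S)"
  let ?D = "real (2*k+1) * (real (2*k+1) - 1)"
  let ?g = "\<lambda>T. pp k T * hh k T"
  have N: "?N \<ge> 2" using k by simp
  have SA: "S \<subseteq> ?A" using S by (simp add: Omega_iff)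
  have AB: "?A = insert ?N ?B" by auto
  have NB: "?N \<notin> ?B" by simp
  have hins: "hh k (insert x S) = hh k S" if "x \<in> ?B" for x using that by (auto simp: hh_def)
  have hrem: "hh k (S - {x}) = hh k S" if "x \<in> ?B" for x using that by (auto simp: hh_def)
  have U: "(\<Sum>x\<in>?A - S. ?g (insert x S)) = (if ?N \<in> S then 0 else pp k S)"
  proof -
    have "(\<Sum>x\<in>?B. if x \<notin> S then ?g (insert x S) else 0) = hh k S * (\<Sum>x\<in>?B. if x \<notin> S then pp k (insert x S) else 0)"
      unfolding sum_distrib_left by (intro sum.cong refl) (simp add: hins)
    also have "\<dots> = 0" using K1 by simp
    finally have z: "(\<Sum>x\<in>?B. if x \<notin> S then ?g (insert x S) else 0) = 0" .
    have "(\<Sum>x\<in>?A - S. ?g (insert x S)) = (\<Sum>x\<in>?A. if x \<notin> S then ?g (insert x S) else 0)"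
      by (rule sum_diff_if) simp
    also have "\<dots> = (if ?N \<notin> S then ?g (insert ?N S) else 0) + (\<Sum>x\<in>?B. if x \<notin> S then ?g (insert x S) else 0)"
      unfolding AB by (rule sum.insert[OF finite_atLeastAtMost NB])
    finally show ?thesis unfolding z by (simp add: pp_insert_big hh_def)
  qed
  have Dn: "(\<Sum>x\<in>S. ?g (S - {x})) = (if ?N \<in> S then 3 * pp k S else 0)"
  proof -
    have "(\<Sum>x\<in>?B. if x \<in> S then ?g (S - {x}) else 0) = hh k S * (\<Sum>x\<in>?B. if x \<in> S then pp k (S - {x}) else 0)"
      unfolding sum_distrib_left by (intro sum.cong refl) (simp add: hrem)
    also have "\<dots> = 0" using K2 by simp
    finally have z: "(\<Sum>x\<in>?B. if x \<in> S then ?g (S - {x}) else 0) = 0" .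
    have "(\<Sum>x\<in>S. ?g (S - {x})) = (\<Sum>x\<in>?A. if x \<in> S then ?g (S - {x}) else 0)"
      by (rule sum_sub_if[OF _ SA]) simp
    also have "\<dots> = (if ?N \<in> S then ?g (S - {?N}) else 0) + (\<Sum>x\<in>?B. if x \<in> S then ?g (S - {x}) else 0)"
      unfolding AB by (rule sum.insert[OF finite_atLeastAtMost NB])
    finally show ?thesis unfolding z by (simp add: pp_remove_big hh_def)
  qed
  have u: "(\<Sum>x\<in>?A - S. ?g (insert x S) - ?g S) = (if ?N \<in> S then 0 else pp k S) - (real ?N - ?n) * ?g S"
    using U card_Diff_real[OF S] by (simp add: sum_subtractf)
  have d: "(\<Sum>x\<in>S. ?g (S - {x}) - ?g S) = (if ?N \<in> S then 3 * pp k S else 0) - ?n * ?g S"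
    using Dn by (simp add: sum_subtractf)
  have Dpos: "?D > 0" using k by simp
  show ?thesis
  proof (cases "pp k S = 0")
    case True
    then show ?thesis unfolding Q_op2[OF S N] u d by simp
  next
    case False
    have "?n = (\<Sum>x\<in>?A. ind x S)" by (rule card_ind[OF finite_atLeastAtMost SA])
    also have "\<dots> = ind ?N S + real k" unfolding AB sum.insert[OF finite_atLeastAtMost NB] K3[OF False] ..
    finally have n: "?n = ind ?N S + real k" .
    show ?thesis
    proof (cases "?N \<in> S")
      case True
      then have n': "?n = real k + 1" using n by (simp add: ind_def)
      show ?thesis unfolding Q_op2[OF S N] u d n' using True Dpos
        apply (simp add: hh_def)
        apply (simp add: field_simps)
        done
    next
      case False
      then have n': "?n = real k" using n by (simp add: ind_def)
      show ?thesis unfolding Q_op2[OF S N] u d n' using False Dpos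
        apply (simp add: hh_def)
        apply (simp add: field_simps)
        done
    qed
  qed
qed


lemma pp_S1: "pp k {x \<in> {1..2*k}. odd x} = 1"
  unfolding pp_def ind_def by (intro prod.neutral) auto

lemma pp_S2: "k \<ge> 1 \<Longrightarrow> pp k {1,2} = 0"
  unfolding pp_def ind_def by (intro prod_zero) (auto intro!: exI[of _ 0])

lemma eig_exists:
  assumes N: "N \<ge> 2"
  shows "\<exists>lam f. is_eigenpair N lam f \<and> \<not> (\<exists>c. \<forall>S\<in>Omega N. f S = c)"
proof -
  define k where "k = N div 2"
  have k1: "k \<ge> 1" unfolding k_def using N by simp
  define S1 where "S1 = {x \<in> {1..2*k}. odd x}"
  have "1 \<in> S1" unfolding S1_def using k1 by auto
  moreover have "S1 \<subseteq> {1..N}" unfolding S1_def k_def by auto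
  ultimately have S1: "S1 \<in> Omega N" unfolding Omega_iff by auto
  have S2: "{1,2} \<in> Omega N" unfolding Omega_iff using N by auto
  show ?thesis
  proof (cases "even N")
    case True
    then have Nk: "N = 2*k" unfolding k_def by simp
    define lam where "lam = 1 - (4/3 * real k * real k + 4/9 * (real k - 1) * real k) / (real (2*k) * (real (2*k) - 1))"
    have eq: "\<forall>S\<in>Omega N. QF N (pp k) S = lam * pp k S"
      unfolding Nk lam_def using eig_even[OF k1] by auto
    have ne: "pp k S1 \<noteq> 0" unfolding S1_def pp_S1 by simp
    have "is_eigenpair N lam (pp k)" unfolding is_eigenpair_def using eq S1 ne by auto
    moreover have "\<not> (\<exists>c. \<forall>S\<in>Omega N. pp k S = c)"
      using S1 S2 ne pp_S2[OF k1] by force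
    ultimately show ?thesis by blast
  next
    case False
    then have Nk: "N = 2*k+1" unfolding k_def by presburger
    define lam where "lam = 1 - 4/9 * real k * (4 * real k + 1) / (real (2*k+1) * (real (2*k+1) - 1))"
    define f where "f T = pp k T * hh k T" for T
    have eq: "\<forall>S\<in>Omega N. QF N f S = lam * f S"
      unfolding Nk lam_def f_def using eig_odd[OF k1] by auto
    have ne: "f S1 \<noteq> 0" unfolding f_def S1_def pp_S1 hh_def by simp
    have "is_eigenpair N lam f" unfolding is_eigenpair_def using eq S1 ne by auto
    moreover have "f {1,2} = 0" unfolding f_def using pp_S2[OF k1] by simp
    then have "\<not> (\<exists>c. \<forall>S\<in>Omega N. f S = c)"
      using S1 S2 ne by force
    ultimately show ?thesis by blast
  qed
qed

lemma spectral:
  assumes N: "N \<ge> 2"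
  shows "spectral_gap N \<ge> 4 / (9 * real N * (real N - 1))"
proof -
  let ?E = "{lam. \<exists>f. is_eigenpair N lam f \<and> \<not> (\<exists>c. \<forall>S\<in>Omega N. f S = c)}"
  have fin: "finite ?E" by (rule finite_subset[OF _ eig_finite[OF N]]) auto
  have ne: "?E \<noteq> {}" using eig_exists[OF N] by auto
  have bd: "\<forall>lam\<in>?E. lam \<le> 1 - 4 / (9 * real N * (real N - 1))"
  proof
    fix lam assume "lam \<in> ?E"
    then obtain f where f: "is_eigenpair N lam f" "\<not> (\<exists>c. \<forall>S\<in>Omega N. f S = c)" by auto
    then have "\<forall>S\<in>Omega N. QF N f S = lam * f S" unfolding is_eigenpair_def by auto
    then show "lam \<le> 1 - 4 / (9 * real N * (real N - 1))" using eig_bound[OF N _ f(2)] by simp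
  qed
  have "second_eigenvalue N \<le> 1 - 4 / (9 * real N * (real N - 1))"
    unfolding second_eigenvalue_def using fin ne bd by simp
  then show ?thesis unfolding spectral_gap_def by simp
qed

theorem mainTheorem5:
  fixes N :: nat
  assumes "N \<ge> 2"
  shows "is_markov_on_Omega N \<and> reversible_wrt N (Mdist N) \<and> ergodic_on_Omega N
         \<and> stationary_distribution N (Mdist N)
         \<and> spectral_gap N \<ge> 4 / (9 * real N * (real N - 1))"
  using markov[OF assms] reversible[OF assms] ergodic[OF assms] stationary[OF assms] spectral[OF assms]
  by blast


end
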